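(* Let $A$ be a finite alphabet, $X\subseteq A^{\mathbb{Z}}$ a subshift, $F\colon X\to X$ a cellular automaton on $X$, $\mu$ a $\sigma$-ergodic Borel probability measure on $X$, and $k\in\mathbb{Z}$ such that $\mu$ is equicontinuous for $(X,F\circ\sigma^{-k})$. Then the Cesàro means $\frac1n\sum_{i=0}^{n-1}\mu\circ F^{-i}$ converge vaguely as $n\to\infty$ to a probability measure $\mu_c$ which is both $F$-invariant and $\sigma$-invariant.
   Context: $\sigma((x_i)_i)=(x_{i+1})_i$ is the shift on $A^{\mathbb{Z}}$ (product topology, metric $d(x,y)=2^{-i}$, $i=\min\{|j|:x_j\ne y_j\}$). A subshift is a closed $\sigma$-invariant subset of $A^{\mathbb{Z}}$; a cellular automaton on $X$ is a continuous map $X\to X$ commuting with $\sigma$ (so $F\circ\sigma^{-k}$ is again one). A point $x$ is an equicontinuity point of $(X,G)$ if for every $\varepsilon>0$ there is $\eta>0$ with $d(x,y)\le\eta\Rightarrow d(G^i x,G^i y)\le\varepsilon$ for all $i>0$; $\mu$ is equicontinuous for $(X,G)$ if the set of equicontinuity points of $(X,G)$ has $\mu$-measure $1$. $\sigma$-ergodic means $\sigma$-invariant and ergodic. Vague convergence means convergence of integrals of all continuous functions. *)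

theory Defs
  imports "HOL-Probability.Probability"
begin

definition full_shift_top :: "'a set \<Rightarrow> (int \<Rightarrow> 'a) topology" where
  "full_shift_top A = product_topology (\<lambda>_. discrete_topology A) UNIV"

definition cdist :: "(int \<Rightarrow> 'a) \<Rightarrow> (int \<Rightarrow> 'a) \<Rightarrow> real" where
  "cdist x y = (if x = y then 0
     else (1/2) ^ (LEAST n. \<exists>j. nat \<bar>j\<bar> = n \<and> x j \<noteq> y j))"

text \<open>shift_by k x = sigma^k x, i.e. (sigma^k x)_i = x_(i+k).\<close>
definition shift_by :: "int \<Rightarrow> (int \<Rightarrow> 'a) \<Rightarrow> (int \<Rightarrow> 'a)" where
  "shift_by k x = (\<lambda>i. x (i + k))"

abbreviation shift :: "(int \<Rightarrow> 'a) \<Rightarrow> (int \<Rightarrow> 'a)" where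
  "shift \<equiv> shift_by 1"

definition subshift :: "'a set \<Rightarrow> (int \<Rightarrow> 'a) set \<Rightarrow> bool" where
  "subshift A X \<longleftrightarrow> X \<subseteq> topspace (full_shift_top A) \<and>
     closedin (full_shift_top A) X \<and> shift ` X = X"

definition cellular_automaton :: "'a set \<Rightarrow> (int \<Rightarrow> 'a) set \<Rightarrow> ((int \<Rightarrow> 'a) \<Rightarrow> (int \<Rightarrow> 'a)) \<Rightarrow> bool" where
  "cellular_automaton A X F \<longleftrightarrow>
     continuous_map (subtopology (full_shift_top A) X) (subtopology (full_shift_top A) X) F \<and>
     (\<forall>x\<in>X. F (shift x) = shift (F x))"

definition borel_sets_on :: "'a set \<Rightarrow> (int \<Rightarrow> 'a) set \<Rightarrow> (int \<Rightarrow> 'a) set set" where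
  "borel_sets_on A X = sigma_sets X {U. openin (subtopology (full_shift_top A) X) U}"

definition borel_prob_on :: "'a set \<Rightarrow> (int \<Rightarrow> 'a) set \<Rightarrow> (int \<Rightarrow> 'a) measure \<Rightarrow> bool" where
  "borel_prob_on A X M \<longleftrightarrow> prob_space M \<and> space M = X \<and> sets M = borel_sets_on A X"

definition invariant_measure :: "(int \<Rightarrow> 'a) measure \<Rightarrow> ((int \<Rightarrow> 'a) \<Rightarrow> (int \<Rightarrow> 'a)) \<Rightarrow> bool" where
  "invariant_measure M T \<longleftrightarrow> T \<in> M \<rightarrow>\<^sub>M M \<and> distr M M T = M"

definition shift_ergodic :: "(int \<Rightarrow> 'a) measure \<Rightarrow> bool" where
  "shift_ergodic M \<longleftrightarrow> invariant_measure M shift \<and>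
     (\<forall>B\<in>sets M. shift -` B \<inter> space M = B \<longrightarrow> emeasure M B = 0 \<or> emeasure M B = 1)"

definition equicont_point :: "(int \<Rightarrow> 'a) set \<Rightarrow> ((int \<Rightarrow> 'a) \<Rightarrow> (int \<Rightarrow> 'a)) \<Rightarrow> (int \<Rightarrow> 'a) \<Rightarrow> bool" where
  "equicont_point X G x \<longleftrightarrow> x \<in> X \<and>
     (\<forall>\<epsilon>>0. \<exists>\<eta>>0. \<forall>y\<in>X. cdist x y \<le> \<eta> \<longrightarrow>
        (\<forall>i>0. cdist ((G ^^ i) x) ((G ^^ i) y) \<le> \<epsilon>))"

definition equicontinuous_measure :: "(int \<Rightarrow> 'a) measure \<Rightarrow> (int \<Rightarrow> 'a) set \<Rightarrow> ((int \<Rightarrow> 'a) \<Rightarrow> (int \<Rightarrow> 'a)) \<Rightarrow> bool" where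
  "equicontinuous_measure M X G \<longleftrightarrow> emeasure M {x. equicont_point X G x} = 1"

end

theory Submission imports Defs begin

definition agr :: "nat \<Rightarrow> (int\<Rightarrow>'a) \<Rightarrow> (int\<Rightarrow>'a) \<Rightarrow> bool" where
  "agr m x y \<longleftrightarrow> (\<forall>i. \<bar>i\<bar> \<le> int m \<longrightarrow> x i = y i)"

lemma topspace_fst: "topspace (full_shift_top A) = {x. \<forall>i. x i \<in> A}"
  by (auto simp: full_shift_top_def topspace_product_topology PiE_def extensional_def)

lemma cyl_eq_PiE:
  assumes "x \<in> topspace (full_shift_top A)"
  shows "{y \<in> topspace (full_shift_top A). agr m x y} =
     PiE UNIV (\<lambda>i. if \<bar>i\<bar> \<le> int m then {x i} else A)"
proof (intro equalityI subsetI)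
  fix y assume "y \<in> {y \<in> topspace (full_shift_top A). agr m x y}"
  then show "y \<in> PiE UNIV (\<lambda>i. if \<bar>i\<bar> \<le> int m then {x i} else A)"
    by (auto simp: topspace_fst agr_def)
next
  fix y assume y: "y \<in> PiE UNIV (\<lambda>i. if \<bar>i\<bar> \<le> int m then {x i} else A)"
  have yi: "y i \<in> (if \<bar>i\<bar> \<le> int m then {x i} else A)" for i
    using y by (simp add: PiE_iff)
  have "y i \<in> A \<and> (\<bar>i\<bar> \<le> int m \<longrightarrow> x i = y i)" for i
    using yi[of i] assms by (cases "\<bar>i\<bar> \<le> int m") (auto simp: topspace_fst)
  then have "\<forall>i. y i \<in> A" "agr m x y"
    by (auto simp: agr_def)
  then show "y \<in> {y \<in> topspace (full_shift_top A). agr m x y}"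
    by (simp add: topspace_fst)
qed

lemma cyl_open:
  assumes "x \<in> topspace (full_shift_top A)"
  shows "openin (full_shift_top A) {y \<in> topspace (full_shift_top A). agr m x y}"
proof -
  have fin: "finite {i::int. (if \<bar>i\<bar> \<le> int m then {x i} else A) \<noteq> A}"
    by (rule finite_subset[of _ "{-int m..int m}"]) auto
  show ?thesis unfolding cyl_eq_PiE[OF assms] unfolding full_shift_top_def
  proof (rule iffD2[OF openin_PiE_gen], rule disjI2, rule conjI)
    show "finite {i \<in> UNIV. (if \<bar>i\<bar> \<le> int m then {x i} else A) \<noteq> topspace (discrete_topology A)}"
      using fin by simp
    have "x i \<in> A" for i using assms by (auto simp: topspace_fst)
    then show "\<forall>i\<in>UNIV. openin (discrete_topology A) (if \<bar>i\<bar> \<le> int m then {x i} else A)"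
      by simp
  qed
qed

lemma cyl_closed:
  assumes "x \<in> topspace (full_shift_top A)"
  shows "closedin (full_shift_top A) {y \<in> topspace (full_shift_top A). agr m x y}"
proof -
  have "x i \<in> A" for i using assms by (auto simp: topspace_fst)
  then show ?thesis unfolding cyl_eq_PiE[OF assms] unfolding full_shift_top_def
    by (intro iffD2[OF closedin_product_topology] disjI2) simp
qed

lemma nbhd:
  assumes "openin (subtopology (full_shift_top A) X) U" "x \<in> U"
    and "X \<subseteq> topspace (full_shift_top A)"
  shows "\<exists>m. \<forall>y\<in>X. agr m x y \<longrightarrow> y \<in> U"
proof -
  obtain V where V: "openin (full_shift_top A) V" "U = V \<inter> X"
    using assms(1) by (auto simp: openin_subtopology)
  have "x \<in> V" using V(2) assms(2) by blast
  then obtain W where W0: "finite {i \<in> UNIV. W i \<noteq> topspace (discrete_topology A)}"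
     "x \<in> PiE UNIV W" "PiE UNIV W \<subseteq> V"
    using V(1) unfolding full_shift_top_def openin_product_topology_alt by blast
  have W: "finite {i. W i \<noteq> A}" "x \<in> PiE UNIV W" "PiE UNIV W \<subseteq> V"
    using W0 by auto
  define m where "m = Max (insert 0 ((\<lambda>i. nat \<bar>i\<bar>) ` {i. W i \<noteq> A}))"
  have mi: "W i = A" if "\<bar>i\<bar> > int m" for i
  proof (rule ccontr)
    assume "W i \<noteq> A"
    then have "nat \<bar>i\<bar> \<le> m" unfolding m_def using W(1) by (intro Max_ge) auto
    then show False using that by auto
  qed
  show ?thesis
  proof (intro exI ballI impI)
    fix y assume y: "y \<in> X" "agr m x y"
    have yA: "\<forall>i. y i \<in> A" using assms(3) y(1) by (auto simp: topspace_fst)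
    have "y i \<in> W i" for i
    proof (cases "\<bar>i\<bar> \<le> int m")
      case True 
      then have "y i = x i" using y(2) by (simp add: agr_def)
      moreover have "x i \<in> W i" using W(2) by (simp add: PiE_iff)
      ultimately show ?thesis by simp
    next
      case False then have "W i = A" using mi by simp
      then show ?thesis using yA by simp
    qed
    then have "y \<in> PiE UNIV W" by (simp add: PiE_iff)
    then show "y \<in> U" using W(3) V(2) y(1) by blast
  qed
qed


lemma agr_refl[simp]: "agr m x x" by (simp add: agr_def)
lemma agr_sym: "agr m x y \<Longrightarrow> agr m y x" by (simp add: agr_def)
lemma agr_trans: "agr m x y \<Longrightarrow> agr m y z \<Longrightarrow> agr m x z" by (simp add: agr_def)
lemma agr_mono: "agr M x y \<Longrightarrow> m \<le> M \<Longrightarrow> agr m x y" by (auto simp: agr_def)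

lemma compact_X:
  assumes "finite A" "subshift A X"
  shows "compactin (full_shift_top A) X"
proof -
  have "compact_space (full_shift_top A)"
    unfolding full_shift_top_def
    by (rule iffD2[OF compact_space_product_topology], rule disjI2) (simp add: compact_space_discrete_topology assms(1))
  then show ?thesis using assms(2) closedin_compact_space unfolding subshift_def by blast
qed

lemma uniform:
  assumes "compactin (full_shift_top A) X" "X \<subseteq> topspace (full_shift_top A)"
    and "\<And>x. x \<in> X \<Longrightarrow> \<exists>m. \<forall>y\<in>X. agr m x y \<longrightarrow> R x y"
  shows "\<exists>M. \<forall>x\<in>X. \<exists>z\<in>X. R z x \<and> (\<forall>y\<in>X. agr M x y \<longrightarrow> R z y)"
proof -
  have "\<forall>x\<in>X. \<exists>m. \<forall>y\<in>X. agr m x y \<longrightarrow> R x y" using assms(3) by blast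
  then obtain mf where mf0: "\<forall>x\<in>X. \<forall>y\<in>X. agr (mf x) x y \<longrightarrow> R x y"
    using bchoice[of X "\<lambda>x m. \<forall>y\<in>X. agr m x y \<longrightarrow> R x y"] by blast
  have mf: "\<And>x y. x \<in> X \<Longrightarrow> y \<in> X \<Longrightarrow> agr (mf x) x y \<Longrightarrow> R x y"
    using mf0 by blast
  define C where "C x = {y \<in> topspace (full_shift_top A). agr (mf x) x y}" for x
  have Co: "openin (full_shift_top A) (C x)" if "x \<in> X" for x
    unfolding C_def using that assms(2) by (intro cyl_open) auto
  have cov: "X \<subseteq> \<Union>(C ` X)"
    using assms(2) unfolding C_def by auto
  obtain FF where FF: "finite FF" "FF \<subseteq> C ` X" "X \<subseteq> \<Union>FF"
  proof -
    have "\<forall>B\<in>C ` X. openin (full_shift_top A) B" using Co by blast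
    moreover have "\<forall>U. (\<forall>B\<in>U. openin (full_shift_top A) B) \<and> X \<subseteq> \<Union>U \<longrightarrow> (\<exists>F. finite F \<and> F \<subseteq> U \<and> X \<subseteq> \<Union>F)"
      using assms(1) unfolding compactin_def by (elim conjE) assumption
    ultimately have "\<exists>F. finite F \<and> F \<subseteq> C ` X \<and> X \<subseteq> \<Union>F" using cov by blast
    then show ?thesis using that by blast
  qed
  obtain Z where Z: "finite Z" "Z \<subseteq> X" "FF = C ` Z"
    using finite_subset_image[OF FF(1,2)] by blast
  define M where "M = Max (insert 0 (mf ` Z))"
  have MZ: "mf z \<le> M" if "z \<in> Z" for z
    unfolding M_def using Z(1) that by (intro Max_ge) auto
  show ?thesis
  proof (intro exI ballI)
    fix x assume x: "x \<in> X"
    then obtain z where z: "z \<in> Z" "x \<in> C z" using FF(3) Z(3) by blast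
    then have zx: "agr (mf z) z x" by (simp add: C_def)
    show "\<exists>z\<in>X. R z x \<and> (\<forall>y\<in>X. agr M x y \<longrightarrow> R z y)"
    proof (intro bexI conjI ballI impI)
      show "z \<in> X" using z Z by blast
      show "R z x" using mf[OF \<open>z \<in> X\<close> x zx] .
      fix y assume y: "y \<in> X" "agr M x y"
      have "agr (mf z) z y" using zx agr_mono[OF y(2) MZ[OF z(1)]] by (rule agr_trans)
      then show "R z y" using mf[OF \<open>z \<in> X\<close> y(1)] by blast
    qed
  qed
qed

lemma topspace_TX:
  assumes "X \<subseteq> topspace (full_shift_top A)"
  shows "topspace (subtopology (full_shift_top A) X) = X"
  using assms by auto

lemma unif_cont:
  assumes "compactin (full_shift_top A) X" "X \<subseteq> topspace (full_shift_top A)"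
    and f: "continuous_map (subtopology (full_shift_top A) X) euclideanreal f" and e: "e > 0"
  shows "\<exists>M. \<forall>x\<in>X. \<forall>y\<in>X. agr M x y \<longrightarrow> \<bar>f x - f y\<bar> < e"
proof -
  have "\<exists>m. \<forall>y\<in>X. agr m x y \<longrightarrow> \<bar>f x - f y\<bar> < e/2" if x: "x \<in> X" for x
  proof -
    have op: "openin (subtopology (full_shift_top A) X) {y \<in> topspace (subtopology (full_shift_top A) X). f y \<in> ball (f x) (e/2)}"
      by (rule openin_continuous_map_preimage[OF f]) simp
    have eq: "{y \<in> topspace (subtopology (full_shift_top A) X). f y \<in> ball (f x) (e/2)} = {y \<in> X. f y \<in> ball (f x) (e/2)}"
      using topspace_TX[OF assms(2)] by simp
    from op have o: "openin (subtopology (full_shift_top A) X) {y \<in> X. f y \<in> ball (f x) (e/2)}"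
      unfolding eq .
    have "x \<in> {y \<in> X. f y \<in> ball (f x) (e/2)}" using x e by simp
    from nbhd[OF o this assms(2)] show ?thesis by (auto simp: dist_real_def)
  qed
  from uniform[OF assms(1,2) this] obtain M where
    M: "\<forall>x\<in>X. \<exists>z\<in>X. \<bar>f z - f x\<bar> < e/2 \<and> (\<forall>y\<in>X. agr M x y \<longrightarrow> \<bar>f z - f y\<bar> < e/2)" by blast
  show ?thesis
  proof (intro exI ballI impI)
    fix x y assume "x \<in> X" "y \<in> X" "agr M x y"
    with M obtain z where "\<bar>f z - f x\<bar> < e/2" "\<bar>f z - f y\<bar> < e/2" by blast
    then show "\<bar>f x - f y\<bar> < e" by linarith
  qed
qed

lemma locality:
  assumes "compactin (full_shift_top A) X" "X \<subseteq> topspace (full_shift_top A)"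
    and G: "continuous_map (subtopology (full_shift_top A) X) (subtopology (full_shift_top A) X) G"
  shows "\<exists>M. \<forall>x\<in>X. \<forall>y\<in>X. agr M x y \<longrightarrow> G x 0 = G y 0"
proof -
  have pc: "continuous_map (full_shift_top A) (discrete_topology A) (\<lambda>z. z 0)"
    unfolding full_shift_top_def by (rule continuous_map_product_projection) simp
  have G': "continuous_map (subtopology (full_shift_top A) X) (full_shift_top A) G"
    using G continuous_map_in_subtopology by blast
  have hc: "continuous_map (subtopology (full_shift_top A) X) (discrete_topology A) (\<lambda>x. G x 0)"
    using continuous_map_compose[OF G' pc] by (simp add: o_def)
  have "\<exists>m. \<forall>y\<in>X. agr m x y \<longrightarrow> G x 0 = G y 0" if x: "x \<in> X" for x
  proof -
    have "G x 0 \<in> topspace (discrete_topology A)"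
      using continuous_map_image_subset_topspace[OF hc] x topspace_TX[OF assms(2)] by blast
    then have GxA: "G x 0 \<in> A" by simp
    have op: "openin (subtopology (full_shift_top A) X) {y \<in> topspace (subtopology (full_shift_top A) X). G y 0 \<in> {G x 0}}"
      by (rule openin_continuous_map_preimage[OF hc]) (use GxA in simp)
    have eq: "{y \<in> topspace (subtopology (full_shift_top A) X). G y 0 \<in> {G x 0}} = {y \<in> X. G y 0 \<in> {G x 0}}"
      using topspace_TX[OF assms(2)] by simp
    from op have o: "openin (subtopology (full_shift_top A) X) {y \<in> X. G y 0 \<in> {G x 0}}"
      unfolding eq .
    have "x \<in> {y \<in> X. G y 0 \<in> {G x 0}}" using x by simp
    from nbhd[OF o this assms(2)] show ?thesis by (metis (mono_tags, lifting) mem_Collect_eq singletonD)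
  qed
  from uniform[OF assms(1,2) this] obtain M where
    M: "\<forall>x\<in>X. \<exists>z\<in>X. G z 0 = G x 0 \<and> (\<forall>y\<in>X. agr M x y \<longrightarrow> G z 0 = G y 0)" by blast
  show ?thesis
  proof (intro exI ballI impI)
    fix x y assume "x \<in> X" "y \<in> X" "agr M x y"
    with M obtain z where "G z 0 = G x 0" "G z 0 = G y 0" by blast
    then show "G x 0 = G y 0" by simp
  qed
qed


lemma bounded_cont:
  assumes "compactin (full_shift_top A) X"
    and f: "continuous_map (subtopology (full_shift_top A) X) euclideanreal f"
  shows "\<exists>B. \<forall>x\<in>X. \<bar>f x\<bar> \<le> B"
proof -
  have "compactin (subtopology (full_shift_top A) X) X"
    using assms(1) by (simp add: compactin_subtopology)
  from image_compactin[OF this f] have "compact (f ` X)" by simp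
  then have "bounded (f ` X)" by (rule compact_imp_bounded)
  then show ?thesis unfolding bounded_real by blast
qed

lemma meas_real:
  assumes "space M = X" "sets M = borel_sets_on A X" "X \<subseteq> topspace (full_shift_top A)"
    and f: "continuous_map (subtopology (full_shift_top A) X) euclideanreal f"
  shows "f \<in> borel_measurable M"
proof (rule borel_measurableI)
  fix S :: "real set" assume "open S"
  then have "openin (subtopology (full_shift_top A) X) {x \<in> topspace (subtopology (full_shift_top A) X). f x \<in> S}"
    by (intro openin_continuous_map_preimage[OF f]) (simp add: open_openin[symmetric])
  moreover have "{x \<in> topspace (subtopology (full_shift_top A) X). f x \<in> S} = f -` S \<inter> space M"
    using assms(1,3) by auto
  ultimately show "f -` S \<inter> space M \<in> sets M"
    unfolding assms(2) borel_sets_on_def by (auto intro: sigma_sets.Basic)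
qed

lemma meas_map:
  assumes "space M = X" "sets M = borel_sets_on A X" "X \<subseteq> topspace (full_shift_top A)"
    and g: "continuous_map (subtopology (full_shift_top A) X) (subtopology (full_shift_top A) X) g"
  shows "g \<in> M \<rightarrow>\<^sub>M M"
proof (rule measurable_sigma_sets)
  show "sets M = sigma_sets X {U. openin (subtopology (full_shift_top A) X) U}"
    using assms(2) by (simp add: borel_sets_on_def)
  show "{U. openin (subtopology (full_shift_top A) X) U} \<subseteq> Pow X"
    using openin_subset assms(3) by fastforce
  show "g \<in> space M \<rightarrow> X"
    using continuous_map_image_subset_topspace[OF g] assms(1,3) by auto
  fix U assume "U \<in> {U. openin (subtopology (full_shift_top A) X) U}"
  then have "openin (subtopology (full_shift_top A) X) {x \<in> topspace (subtopology (full_shift_top A) X). g x \<in> U}"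
    by (intro openin_continuous_map_preimage[OF g]) simp
  moreover have "{x \<in> topspace (subtopology (full_shift_top A) X). g x \<in> U} = g -` U \<inter> space M"
    using assms(1,3) by auto
  ultimately show "g -` U \<inter> space M \<in> sets M"
    unfolding assms(2) borel_sets_on_def by (auto intro: sigma_sets.Basic)
qed

lemma shift_by_add: "shift_by a (shift_by b x) = shift_by (a + b) x"
  unfolding shift_by_def by (rule ext) (simp add: add_ac)

lemma shift_by_0[simp]: "shift_by 0 x = x"
  by (simp add: shift_by_def)

lemma cdist_small_agr:
  assumes "cdist a b \<le> (1/2) ^ (r + 1)"
  shows "agr r a b"
proof (cases "a = b")
  case True then show ?thesis by simp
next
  case False
  define L where "L = (LEAST n. \<exists>j. nat \<bar>j\<bar> = n \<and> a j \<noteq> b j)"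
  have "(1/2::real) ^ L \<le> (1/2) ^ (r + 1)" using assms False by (simp add: cdist_def L_def)
  moreover have "(0::real) < 1/2" "(1/2::real) < 1" by simp_all
  ultimately have rL: "r + 1 \<le> L" using power_decreasing_iff[of "1/2::real" L "r+1"] by blast
  show ?thesis unfolding agr_def
  proof (intro allI impI)
    fix i :: int assume i: "\<bar>i\<bar> \<le> int r"
    show "a i = b i"
    proof (rule ccontr)
      assume "a i \<noteq> b i"
      then have "L \<le> nat \<bar>i\<bar>" unfolding L_def by (intro Least_le) blast
      then show False using rL i by linarith
    qed
  qed
qed

lemma agr_cdist_small:
  assumes "agr m a b"
  shows "cdist a b \<le> (1/2) ^ (m + 1)"
proof (cases "a = b")
  case True then show ?thesis by (simp add: cdist_def)
next
  case False
  then obtain j where "a j \<noteq> b j" by blast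
  then have "\<exists>j. nat \<bar>j\<bar> = nat \<bar>j\<bar> \<and> a j \<noteq> b j" by blast
  define L where "L = (LEAST n. \<exists>j. nat \<bar>j\<bar> = n \<and> a j \<noteq> b j)"
  have "\<exists>j. nat \<bar>j\<bar> = L \<and> a j \<noteq> b j"
    unfolding L_def by (rule LeastI) (use \<open>a j \<noteq> b j\<close> in blast)
  then obtain j0 where j0: "nat \<bar>j0\<bar> = L" "a j0 \<noteq> b j0" by blast
  then have "\<not> \<bar>j0\<bar> \<le> int m" using assms by (auto simp: agr_def)
  then have "m + 1 \<le> L" using j0(1) by linarith
  then have "(1/2::real) ^ L \<le> (1/2) ^ (m + 1)" by (rule power_decreasing) simp_all
  moreover have "cdist a b = (1/2) ^ L" using False by (simp add: cdist_def L_def)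
  ultimately show ?thesis by simp
qed

lemma shift_sum_const:
  fixes v :: "nat \<Rightarrow> real"
  assumes per: "\<forall>n\<ge>n0. v (n + p) = v n"
  shows "n \<ge> n0 \<Longrightarrow> (\<Sum>i\<in>{n..<n+p}. v i) = (\<Sum>i\<in>{n0..<n0+p}. v i)"
proof (induction n rule: dec_induct)
  case base then show ?case by simp
next
  case (step n)
  show ?case
  proof (cases "p = 0")
    case True then show ?thesis by simp
  next
    case False
    have "(\<Sum>i\<in>{Suc n..<Suc n+p}. v i) = (\<Sum>i\<in>{Suc n..<n+p}. v i) + v (n + p)"
      using False by (simp add: sum.atLeastLessThan_Suc)
    also have "v (n + p) = v n" using per step(1) by simp
    also have "(\<Sum>i\<in>{Suc n..<n+p}. v i) + v n = (\<Sum>i\<in>{n..<n+p}. v i)"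
      using False by (simp add: sum.atLeast_Suc_lessThan)
    finally show ?thesis using step(3) by simp
  qed
qed

lemma ces_periodic:
  fixes v :: "nat \<Rightarrow> real"
  assumes p: "p > 0" and per: "\<forall>n\<ge>n0. v (n + p) = v n"
  shows "convergent (\<lambda>n. (1 / real n) * (\<Sum>i<n. v i))"
proof -
  define c where "c = (\<Sum>i\<in>{n0..<n0+p}. v i) / real p"
  define T where "T n = (\<Sum>i<n. v i) - real n * c" for n
  have Tp: "T (n + p) = T n" if "n \<ge> n0" for n
  proof -
    have "(\<Sum>i<n+p. v i) = (\<Sum>i<n. v i) + (\<Sum>i\<in>{n..<n+p}. v i)"
      by (simp add: sum.atLeastLessThan_concat[symmetric] lessThan_atLeast0)
    also have "(\<Sum>i\<in>{n..<n+p}. v i) = real p * c"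
      using shift_sum_const[OF per that] p by (simp add: c_def)
    finally show ?thesis unfolding T_def by (simp add: algebra_simps)
  qed
  define K where "K = Max ((\<lambda>j. \<bar>T j\<bar>) ` {..<n0+p})"
  have TK: "\<bar>T n\<bar> \<le> K" for n
  proof (induction n rule: less_induct)
    case (less n)
    show ?case
    proof (cases "n < n0 + p")
      case True then show ?thesis unfolding K_def by (intro Max_ge) auto
    next
      case False
      then have "T n = T (n - p)" using Tp[of "n - p"] by simp
      moreover have "n - p < n" using p False by simp
      ultimately show ?thesis using less by simp
    qed
  qed
  have K0: "(\<lambda>n. K / real n) \<longlonglongrightarrow> 0" by (rule lim_const_over_n)
  have "(\<lambda>n. T n / real n) \<longlonglongrightarrow> 0"
  proof (rule Lim_null_comparison[OF _ K0])
    show "\<forall>\<^sub>F n in sequentially. norm (T n / real n) \<le> K / real n"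
      using TK by (intro always_eventually allI) (simp add: divide_right_mono abs_divide)
  qed
  then have "(\<lambda>n. c + T n / real n) \<longlonglongrightarrow> c + 0" by (intro tendsto_add tendsto_const)
  moreover have "\<forall>\<^sub>F n in sequentially. c + T n / real n = (1 / real n) * (\<Sum>i<n. v i)"
  proof (rule eventually_sequentiallyI[of 1])
    fix n :: nat assume "1 \<le> n"
    then show "c + T n / real n = (1 / real n) * (\<Sum>i<n. v i)"
      unfolding T_def by (simp add: field_simps)
  qed
  ultimately have "(\<lambda>n. (1 / real n) * (\<Sum>i<n. v i)) \<longlonglongrightarrow> c"
    using Lim_transform_eventually by fastforce
  then show ?thesis by (rule convergentI)
qed

lemma approx_conv:
  fixes a :: "nat \<Rightarrow> real"
  assumes "\<And>e. e > 0 \<Longrightarrow> \<exists>b. convergent b \<and> (\<forall>n. \<bar>a n - b n\<bar> \<le> e)"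
  shows "convergent a"
proof -
  have "Cauchy a"
  proof (rule metric_CauchyI)
    fix e :: real assume e: "e > 0"
    then obtain b where b: "convergent b" "\<forall>n. \<bar>a n - b n\<bar> \<le> e/4" using assms[of "e/4"] by auto
    have "Cauchy b" using b(1) Cauchy_convergent_iff by blast
    then obtain M where M: "\<forall>m\<ge>M. \<forall>n\<ge>M. dist (b m) (b n) < e/4"
      using metric_CauchyD[of b "e/4"] e by auto
    show "\<exists>M. \<forall>m\<ge>M. \<forall>n\<ge>M. dist (a m) (a n) < e"
    proof (intro exI allI impI)
      fix m n assume "m \<ge> M" "n \<ge> M"
      then have "\<bar>b m - b n\<bar> < e/4" using M by (simp add: dist_real_def)
      moreover have "\<bar>a m - b m\<bar> \<le> e/4" "\<bar>a n - b n\<bar> \<le> e/4" using b(2) by auto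
      ultimately show "dist (a m) (a n) < e" unfolding dist_real_def by linarith
    qed
  qed
  then show ?thesis using Cauchy_convergent_iff by blast
qed

lemma ces_approx:
  fixes u :: "nat \<Rightarrow> real"
  assumes "\<And>e. e > 0 \<Longrightarrow> \<exists>v n0 p. p > 0 \<and> (\<forall>n\<ge>n0. v (n + p) = v n) \<and> (\<forall>i. \<bar>u i - v i\<bar> \<le> e)"
  shows "convergent (\<lambda>n. (1 / real n) * (\<Sum>i<n. u i))"
proof (rule approx_conv)
  fix e :: real assume e: "e > 0"
  then obtain v n0 p where v: "p > 0" "\<forall>n\<ge>n0. v (n + p) = v n" "\<forall>i. \<bar>u i - v i\<bar> \<le> e"
    using assms by blast
  show "\<exists>b. convergent b \<and> (\<forall>n. \<bar>(1 / real n) * (\<Sum>i<n. u i) - b n\<bar> \<le> e)"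
  proof (intro exI conjI allI)
    show "convergent (\<lambda>n. (1 / real n) * (\<Sum>i<n. v i))" by (rule ces_periodic[OF v(1,2)])
    fix n :: nat
    show "\<bar>(1 / real n) * (\<Sum>i<n. u i) - (1 / real n) * (\<Sum>i<n. v i)\<bar> \<le> e"
    proof (cases "n = 0")
      case True then show ?thesis using e by simp
    next
      case False
      have "\<bar>(\<Sum>i<n. u i) - (\<Sum>i<n. v i)\<bar> = \<bar>\<Sum>i<n. u i - v i\<bar>" by (simp add: sum_subtractf)
      also have "\<dots> \<le> (\<Sum>i<n. \<bar>u i - v i\<bar>)" by (rule sum_abs)
      also have "\<dots> \<le> (\<Sum>i<n. e)" using v(3) by (intro sum_mono) auto
      also have "\<dots> = real n * e" by simp
      finally have h: "\<bar>(\<Sum>i<n. u i) - (\<Sum>i<n. v i)\<bar> \<le> real n * e" .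
      have "\<bar>(1 / real n) * (\<Sum>i<n. u i) - (1 / real n) * (\<Sum>i<n. v i)\<bar>
          = \<bar>(\<Sum>i<n. u i) - (\<Sum>i<n. v i)\<bar> / real n"
        by (simp add: diff_divide_distrib[symmetric] abs_divide)
      also have "\<dots> \<le> real n * e / real n" using h False by (intro divide_right_mono) auto
      also have "\<dots> = e" using False by simp
      finally show ?thesis .
    qed
  qed
qed

locale ctx =
  fixes A :: "'a set" and X :: "(int \<Rightarrow> 'a) set"
    and F :: "(int \<Rightarrow> 'a) \<Rightarrow> (int \<Rightarrow> 'a)"
    and \<mu> :: "(int \<Rightarrow> 'a) measure" and k :: int
  assumes finA: "finite A"
    and sub: "subshift A X"
    and ca: "cellular_automaton A X F"
    and bp: "borel_prob_on A X \<mu>"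
    and erg: "shift_ergodic \<mu>"
    and eqc: "equicontinuous_measure \<mu> X (F \<circ> shift_by (- k))"
begin

abbreviation "T \<equiv> full_shift_top A"
abbreviation "TX \<equiv> subtopology T X"

lemma X_sub: "X \<subseteq> topspace T" using sub by (simp add: subshift_def)
lemma topTX[simp]: "topspace TX = X" using X_sub by auto
lemma compX: "compactin T X" using compact_X[OF finA sub] .
lemma X_A: "x \<in> X \<Longrightarrow> x i \<in> A" using X_sub by (auto simp: topspace_fst)

lemma spaceM[simp]: "space \<mu> = X" using bp by (simp add: borel_prob_on_def)
lemma setsM: "sets \<mu> = borel_sets_on A X" using bp by (simp add: borel_prob_on_def)
lemma probM: "prob_space \<mu>" using bp by (simp add: borel_prob_on_def)

lemma shift_X: "x \<in> X \<Longrightarrow> shift x \<in> X" using sub by (auto simp: subshift_def)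
lemma shiftinv_X: "x \<in> X \<Longrightarrow> shift_by (-1) x \<in> X"
proof -
  assume "x \<in> X"
  then obtain y where "y \<in> X" "x = shift y" using sub by (auto simp: subshift_def)
  then have "shift_by (-1) x = y" by (simp add: shift_by_add)
  then show ?thesis using \<open>y \<in> X\<close> by simp
qed

lemma shift_by_nat_X: "x \<in> X \<Longrightarrow> shift_by (int n) x \<in> X \<and> shift_by (- int n) x \<in> X"
proof (induction n)
  case 0 then show ?case by simp
next
  case (Suc n)
  have "shift_by (int (Suc n)) x = shift (shift_by (int n) x)"
    "shift_by (- int (Suc n)) x = shift_by (-1) (shift_by (- int n) x)"
    by (simp_all add: shift_by_add add.commute)
  then show ?case using Suc shift_X shiftinv_X by simp
qed

lemma shift_by_X: "x \<in> X \<Longrightarrow> shift_by j x \<in> X"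
proof (cases "j \<ge> 0")
  case True
  then obtain n where "j = int n" by (metis nonneg_eq_int)
  then show "x \<in> X \<Longrightarrow> shift_by j x \<in> X" using shift_by_nat_X by simp
next
  case False
  then obtain n where "j = - int n" by (metis linear minus_minus neg_0_le_iff_le nonneg_eq_int)
  then show "x \<in> X \<Longrightarrow> shift_by j x \<in> X" using shift_by_nat_X by simp
qed

lemma cont_F: "continuous_map TX TX F" using ca by (simp add: cellular_automaton_def)
lemma F_X: "x \<in> X \<Longrightarrow> F x \<in> X"
  using continuous_map_image_subset_topspace[OF cont_F] X_sub by auto
lemma F_shift1: "x \<in> X \<Longrightarrow> F (shift x) = shift (F x)"
  using ca by (simp add: cellular_automaton_def)

lemma F_shift_nat: "x \<in> X \<Longrightarrow> F (shift_by (int n) x) = shift_by (int n) (F x)"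
proof (induction n)
  case 0 then show ?case by simp
next
  case (Suc n)
  have e: "shift_by (int (Suc n)) z = shift (shift_by (int n) z)" for z :: "int \<Rightarrow> 'a"
    by (simp add: shift_by_add add.commute)
  show ?case unfolding e using Suc F_shift1 shift_by_X by simp
qed

lemma F_shift: "x \<in> X \<Longrightarrow> F (shift_by j x) = shift_by j (F x)"
proof (cases "j \<ge> 0")
  case True
  then obtain n where "j = int n" by (metis nonneg_eq_int)
  then show "x \<in> X \<Longrightarrow> F (shift_by j x) = shift_by j (F x)" using F_shift_nat by simp
next
  case False
  then obtain n where j: "j = - int n" by (metis linear minus_minus neg_0_le_iff_le nonneg_eq_int)
  assume x: "x \<in> X"
  define y where "y = shift_by j x"
  have y: "y \<in> X" using x shift_by_X y_def by simp
  have "F x = F (shift_by (int n) y)" unfolding y_def j by (simp add: shift_by_add)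
  also have "\<dots> = shift_by (int n) (F y)" using F_shift_nat y by simp
  finally have "shift_by j (F x) = F y" unfolding j by (simp add: shift_by_add)
  then show ?thesis unfolding y_def by simp
qed

lemma cont_shift_by: "continuous_map TX TX (shift_by j)"
proof -
  have "continuous_map TX T (shift_by j)"
    unfolding full_shift_top_def continuous_map_componentwise_UNIV
  proof
    fix i
    have "continuous_map (product_topology (\<lambda>_. discrete_topology A) UNIV) (discrete_topology A) (\<lambda>x. x (i + j))"
      by (rule continuous_map_product_projection) simp
    then show "continuous_map (subtopology (product_topology (\<lambda>_. discrete_topology A) UNIV) X) (discrete_topology A) (\<lambda>x. shift_by j x i)"
      unfolding shift_by_def by (rule continuous_map_from_subtopology)
  qed
  then show ?thesis using shift_by_X by (auto simp: continuous_map_in_subtopology)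
qed

definition G where "G = F \<circ> shift_by (- k)"

lemma G_apply: "G x = F (shift_by (-k) x)" by (simp add: G_def)
lemma G_X: "x \<in> X \<Longrightarrow> G x \<in> X" by (simp add: G_apply F_X shift_by_X)
lemma G_shift: "x \<in> X \<Longrightarrow> G (shift_by j x) = shift_by j (G x)"
  by (simp add: G_apply shift_by_add F_shift[symmetric] shift_by_X add.commute)
lemma cont_G: "continuous_map TX TX G"
  unfolding G_def by (rule continuous_map_compose[OF cont_shift_by cont_F])

lemma Gn_X: "x \<in> X \<Longrightarrow> (G ^^ n) x \<in> X"
  by (induction n) (auto simp: G_X)
lemma Fn_X: "x \<in> X \<Longrightarrow> (F ^^ n) x \<in> X"
  by (induction n) (auto simp: F_X)
lemma Gn_shift: "x \<in> X \<Longrightarrow> (G ^^ n) (shift_by j x) = shift_by j ((G ^^ n) x)"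
  by (induction n) (auto simp: G_shift Gn_X)
lemma Fn_shift: "x \<in> X \<Longrightarrow> (F ^^ n) (shift_by j x) = shift_by j ((F ^^ n) x)"
  by (induction n) (auto simp: F_shift Fn_X)
lemma cont_Gn: "continuous_map TX TX (G ^^ n)"
proof (induction n)
  case (Suc n)
  have "G ^^ Suc n = G \<circ> (G ^^ n)" by simp
  then show ?case using continuous_map_compose[OF Suc.IH cont_G] by (simp add: o_def)
qed simp
lemma cont_Fn: "continuous_map TX TX (F ^^ n)"
proof (induction n)
  case (Suc n)
  have "F ^^ Suc n = F \<circ> (F ^^ n)" by simp
  then show ?case using continuous_map_compose[OF Suc.IH cont_F] by (simp add: o_def)
qed simp

lemma Gn_Fn: "x \<in> X \<Longrightarrow> (G ^^ n) x = (F ^^ n) (shift_by (- (k * int n)) x)"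
proof (induction n)
  case 0 then show ?case by simp
next
  case (Suc n)
  have "(G ^^ Suc n) x = G ((G ^^ n) x)" by simp
  also have "\<dots> = G ((F ^^ n) (shift_by (- (k * int n)) x))"
    using Suc.IH Suc.prems by simp
  also have "\<dots> = F (shift_by (-k) ((F ^^ n) (shift_by (- (k * int n)) x)))"
    by (rule G_apply)
  also have "\<dots> = F ((F ^^ n) (shift_by (-k) (shift_by (- (k * int n)) x)))"
    using Fn_shift Suc.prems shift_by_X by simp
  also have "\<dots> = (F ^^ Suc n) (shift_by (- (k * int (Suc n))) x)"
    by (simp add: shift_by_add algebra_simps)
  finally show ?case .
qed

lemma Fn_Gn: "x \<in> X \<Longrightarrow> (F ^^ n) x = (G ^^ n) (shift_by (k * int n) x)"
  using Gn_Fn[of "shift_by (k * int n) x" n] shift_by_X by (simp add: shift_by_add)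


abbreviation "contf f \<equiv> continuous_map TX euclideanreal f"

lemma contf_comp: "contf f \<Longrightarrow> continuous_map TX TX g \<Longrightarrow> contf (\<lambda>x. f (g x))"
  using continuous_map_compose[of TX TX g euclideanreal f] by (simp add: o_def)

lemma meas_f: "contf f \<Longrightarrow> f \<in> borel_measurable \<mu>"
  using meas_real[OF spaceM setsM X_sub] by blast

lemma meas_g: "continuous_map TX TX g \<Longrightarrow> g \<in> \<mu> \<rightarrow>\<^sub>M \<mu>"
  using meas_map[OF spaceM setsM X_sub] by blast

lemma int_f: "contf f \<Longrightarrow> integrable \<mu> f"
proof -
  assume f: "contf f"
  obtain B where B: "\<forall>x\<in>X. \<bar>f x\<bar> \<le> B" using bounded_cont[OF compX f] by blast
  interpret prob_space \<mu> by (rule probM)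
  show ?thesis
    by (rule integrable_const_bound[where B=B]) (use B meas_f[OF f] in auto)
qed

lemma inv_shift: "distr \<mu> \<mu> shift = \<mu>"
  using erg by (simp add: shift_ergodic_def invariant_measure_def)

lemma int_shift1: "contf f \<Longrightarrow> (\<integral>x. f (shift x) \<partial>\<mu>) = (\<integral>x. f x \<partial>\<mu>)"
proof -
  assume f: "contf f"
  have "(\<integral>x. f x \<partial>(distr \<mu> \<mu> shift)) = (\<integral>x. f (shift x) \<partial>\<mu>)"
    by (rule integral_distr[OF meas_g[OF cont_shift_by] meas_f[OF f]])
  then show ?thesis using inv_shift by simp
qed

lemma int_shift_nat: "contf f \<Longrightarrow> (\<integral>x. f (shift_by (int n) x) \<partial>\<mu>) = (\<integral>x. f x \<partial>\<mu>)"
proof (induction n arbitrary: f)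
  case 0 then show ?case by simp
next
  case (Suc n)
  have e: "shift_by (int (Suc n)) x = shift_by (int n) (shift x)" for x :: "int \<Rightarrow> 'a"
    by (simp add: shift_by_add add.commute)
  have c: "contf (\<lambda>y. f (shift_by (int n) y))" by (rule contf_comp[OF Suc.prems cont_shift_by])
  show ?case unfolding e int_shift1[OF c] using Suc.IH[OF Suc.prems] .
qed

lemma int_shift: "contf f \<Longrightarrow> (\<integral>x. f (shift_by j x) \<partial>\<mu>) = (\<integral>x. f x \<partial>\<mu>)"
proof (cases "j \<ge> 0")
  case True
  then obtain n where "j = int n" by (metis nonneg_eq_int)
  then show "contf f \<Longrightarrow> ?thesis" using int_shift_nat by simp
next
  case False
  then obtain n where j: "j = - int n" by (metis linear minus_minus neg_0_le_iff_le nonneg_eq_int)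
  assume f: "contf f"
  have c: "contf (\<lambda>y. f (shift_by j y))" by (rule contf_comp[OF f cont_shift_by])
  have "(\<integral>x. f x \<partial>\<mu>) = (\<integral>x. f (shift_by j (shift_by (int n) x)) \<partial>\<mu>)"
    unfolding j by (simp add: shift_by_add)
  also have "\<dots> = (\<integral>x. f (shift_by j x) \<partial>\<mu>)" by (rule int_shift_nat[OF c])
  finally show ?thesis by simp
qed

lemma int_F_G: "contf f \<Longrightarrow> (\<integral>x. f ((F ^^ i) x) \<partial>\<mu>) = (\<integral>x. f ((G ^^ i) x) \<partial>\<mu>)"
proof -
  assume f: "contf f"
  have "(\<integral>x. f ((F ^^ i) x) \<partial>\<mu>) = (\<integral>x. f ((G ^^ i) (shift_by (k * int i) x)) \<partial>\<mu>)"
    by (intro Bochner_Integration.integral_cong refl) (simp add: Fn_Gn)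
  also have "\<dots> = (\<integral>x. f ((G ^^ i) x) \<partial>\<mu>)"
    by (rule int_shift[OF contf_comp[OF f cont_Gn]])
  finally show ?thesis .
qed

definition ces :: "((int \<Rightarrow> 'a) \<Rightarrow> real) \<Rightarrow> nat \<Rightarrow> real" where
  "ces f n = (1 / real n) * (\<Sum>i<n. integral\<^sup>L (distr \<mu> \<mu> (F ^^ i)) f)"

lemma ces_F: "contf f \<Longrightarrow> ces f n = (1 / real n) * (\<Sum>i<n. \<integral>x. f ((F ^^ i) x) \<partial>\<mu>)"
  unfolding ces_def by (simp add: integral_distr[OF meas_g[OF cont_Fn] meas_f])

lemma ces_G: "contf f \<Longrightarrow> ces f n = (1 / real n) * (\<Sum>i<n. \<integral>x. f ((G ^^ i) x) \<partial>\<mu>)"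
  unfolding ces_F by (simp add: int_F_G)


lemma local_G: "\<exists>\<rho>. \<forall>x\<in>X. \<forall>y\<in>X. \<forall>j. (\<forall>i. \<bar>i - j\<bar> \<le> int \<rho> \<longrightarrow> x i = y i) \<longrightarrow> G x j = G y j"
proof -
  obtain \<rho> where r: "\<forall>x\<in>X. \<forall>y\<in>X. agr \<rho> x y \<longrightarrow> G x 0 = G y 0"
    using locality[OF compX X_sub cont_G] by blast
  show ?thesis
  proof (intro exI ballI allI impI)
    fix x y j assume xy: "x \<in> X" "y \<in> X" and a: "\<forall>i. \<bar>i - j\<bar> \<le> int \<rho> \<longrightarrow> x i = y i"
    have "agr \<rho> (shift_by j x) (shift_by j y)"
      unfolding agr_def shift_by_def using a by simp
    then have "G (shift_by j x) 0 = G (shift_by j y) 0"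
      using r shift_by_X xy by blast
    then show "G x j = G y j" using G_shift xy by (simp add: shift_by_def)
  qed
qed

definition cyl :: "nat \<Rightarrow> (int \<Rightarrow> 'a) \<Rightarrow> (int \<Rightarrow> 'a) set" where
  "cyl m x = {y \<in> X. agr m x y}"

lemma cyl_openX: "x \<in> X \<Longrightarrow> openin TX (cyl m x)"
proof -
  assume x: "x \<in> X"
  have "cyl m x = {y \<in> topspace T. agr m x y} \<inter> X" unfolding cyl_def using X_sub by auto
  then show ?thesis using cyl_open[of x A m] x X_sub by (auto simp: openin_subtopology)
qed

lemma cyl_closedX: "x \<in> X \<Longrightarrow> closedin TX (cyl m x)"
proof -
  assume x: "x \<in> X"
  have "cyl m x = {y \<in> topspace T. agr m x y} \<inter> X" unfolding cyl_def using X_sub by auto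
  then show ?thesis using cyl_closed[of x A m] x X_sub by (auto simp: closedin_subtopology)
qed

lemma openin_sets: "openin TX U \<Longrightarrow> U \<in> sets \<mu>"
  unfolding setsM borel_sets_on_def by (auto intro: sigma_sets.Basic)

lemma cyl_sets: "x \<in> X \<Longrightarrow> cyl m x \<in> sets \<mu>"
  using cyl_openX openin_sets by blast

lemma finite_cyls: "finite (cyl m ` X)"
proof -
  have "cyl m ` X \<subseteq> (\<lambda>u. {y \<in> X. \<forall>i\<in>{- int m..int m}. y i = u i}) ` (PiE {- int m..int m} (\<lambda>_. A))"
  proof
    fix C assume "C \<in> cyl m ` X"
    then obtain x where x: "x \<in> X" "C = cyl m x" by blast
    have "restrict x {- int m..int m} \<in> PiE {- int m..int m} (\<lambda>_. A)" using X_A[OF x(1)] by simp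
    moreover have "C = {y \<in> X. \<forall>i\<in>{- int m..int m}. y i = restrict x {- int m..int m} i}"
      unfolding x(2) cyl_def agr_def by (auto simp: abs_le_iff)
    ultimately show "C \<in> (\<lambda>u. {y \<in> X. \<forall>i\<in>{- int m..int m}. y i = u i}) ` (PiE {- int m..int m} (\<lambda>_. A))"
      by blast
  qed
  moreover have "finite (PiE {- int m..int m} (\<lambda>_. A))" using finA by (intro finite_PiE) auto
  ultimately show ?thesis using finite_subset by blast
qed

lemma equi_block:
  assumes "equicont_point X G x0"
  shows "\<exists>m. \<forall>y\<in>X. agr m x0 y \<longrightarrow> (\<forall>n. agr r ((G ^^ n) x0) ((G ^^ n) y))"
proof -
  have "(1/2::real) ^ (r + 1) > 0" by simp
  then obtain \<eta> where eta: "\<eta> > 0" "\<forall>y\<in>X. cdist x0 y \<le> \<eta> \<longrightarrow> (\<forall>i>0. cdist ((G ^^ i) x0) ((G ^^ i) y) \<le> (1/2) ^ (r + 1))"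
    using assms unfolding equicont_point_def G_def by blast
  obtain m0 where m0: "(1/2::real) ^ m0 < \<eta>" using real_arch_pow_inv[OF eta(1), of "1/2"] by auto
  define m where "m = m0 + r"
  have "(1/2::real) ^ (m + 1) \<le> (1/2) ^ m0" unfolding m_def by (rule power_decreasing) simp_all
  then have mh: "(1/2::real) ^ (m + 1) \<le> \<eta>" using m0 by linarith
  show ?thesis
  proof (intro exI ballI impI allI)
    fix y n assume y: "y \<in> X" "agr m x0 y"
    show "agr r ((G ^^ n) x0) ((G ^^ n) y)"
    proof (cases "n = 0")
      case True then show ?thesis using y(2) agr_mono[of m x0 y r] by (simp add: m_def)
    next
      case False
      have "cdist x0 y \<le> \<eta>" using agr_cdist_small[OF y(2)] mh by linarith
      then have "cdist ((G ^^ n) x0) ((G ^^ n) y) \<le> (1/2) ^ (r + 1)" using eta(2) y(1) False by blast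
      then show ?thesis by (rule cdist_small_agr)
    qed
  qed
qed


lemma good_block: "\<exists>\<rho> m x0. (\<forall>x\<in>X. \<forall>y\<in>X. \<forall>j. (\<forall>i. \<bar>i - j\<bar> \<le> int \<rho> \<longrightarrow> x i = y i) \<longrightarrow> G x j = G y j)
   \<and> x0 \<in> X \<and> (\<forall>y\<in>X. agr m x0 y \<longrightarrow> (\<forall>n. agr \<rho> ((G ^^ n) x0) ((G ^^ n) y)))
   \<and> emeasure \<mu> (cyl m x0) \<noteq> 0"
proof -
  obtain \<rho> where \<rho>: "\<forall>x\<in>X. \<forall>y\<in>X. \<forall>j. (\<forall>i. \<bar>i - j\<bar> \<le> int \<rho> \<longrightarrow> x i = y i) \<longrightarrow> G x j = G y j"
    using local_G by blast
  define B where "B m = {x\<in>X. \<forall>y\<in>X. agr m x y \<longrightarrow> (\<forall>n. agr \<rho> ((G ^^ n) x) ((G ^^ n) y))}" for m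
  have "\<exists>m x0. x0 \<in> B m \<and> emeasure \<mu> (cyl m x0) \<noteq> 0"
  proof (rule ccontr)
    assume H: "\<not> (\<exists>m x0. x0 \<in> B m \<and> emeasure \<mu> (cyl m x0) \<noteq> 0)"
    define N where "N m = (\<Union>C\<in>cyl m ` B m. C)" for m
    have BX: "B m \<subseteq> X" for m unfolding B_def by blast
    have Nn: "N m \<in> null_sets \<mu>" for m
      unfolding N_def
    proof (rule null_sets_UN')
      show "countable (cyl m ` B m)"
        using finite_subset[OF image_mono[OF BX] finite_cyls] by (rule countable_finite)
      fix C assume "C \<in> cyl m ` B m"
      then obtain x where x: "x \<in> B m" "C = cyl m x" by blast
      then show "C \<in> null_sets \<mu>" using H cyl_sets BX by blast
    qed
    have NN: "(\<Union>m. N m) \<in> null_sets \<mu>" using Nn by blast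
    have EN: "{x. equicont_point X G x} \<subseteq> (\<Union>m. N m)"
    proof
      fix x assume "x \<in> {x. equicont_point X G x}"
      then have x: "equicont_point X G x" by simp
      then have xX: "x \<in> X" by (simp add: equicont_point_def)
      obtain m where "\<forall>y\<in>X. agr m x y \<longrightarrow> (\<forall>n. agr \<rho> ((G ^^ n) x) ((G ^^ n) y))"
        using equi_block[OF x] by blast
      then have "x \<in> B m" using xX by (simp add: B_def)
      moreover have "x \<in> cyl m x" using xX by (simp add: cyl_def)
      ultimately show "x \<in> (\<Union>m. N m)" unfolding N_def by blast
    qed
    have "emeasure \<mu> {x. equicont_point X G x} = 0"
      by (rule emeasure_eq_0[OF _ _ EN]) (use NN in auto)
    moreover have "emeasure \<mu> {x. equicont_point X G x} = 1"
      using eqc by (simp add: equicontinuous_measure_def G_def)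
    ultimately show False by simp
  qed
  then obtain m x0 where "x0 \<in> B m" "emeasure \<mu> (cyl m x0) \<noteq> 0" by blast
  then show ?thesis using \<rho> unfolding B_def by blast
qed

lemma erg_one: "S \<in> sets \<mu> \<Longrightarrow> shift -` S \<inter> X = S \<Longrightarrow> emeasure \<mu> S \<noteq> 0 \<Longrightarrow> emeasure \<mu> S = 1"
  using erg by (auto simp: shift_ergodic_def)

lemma pres: "S \<in> sets \<mu> \<Longrightarrow> emeasure \<mu> (shift -` S \<inter> X) = emeasure \<mu> S"
proof -
  assume S: "S \<in> sets \<mu>"
  have "emeasure (distr \<mu> \<mu> shift) S = emeasure \<mu> (shift -` S \<inter> space \<mu>)"
    by (rule emeasure_distr[OF meas_g[OF cont_shift_by] S])
  then show ?thesis using inv_shift by simp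
qed

lemma pre_sets: "S \<in> sets \<mu> \<Longrightarrow> shift_by b -` S \<inter> X \<in> sets \<mu>"
  using measurable_sets[OF meas_g[OF cont_shift_by[of b]]] by simp

lemma dec_meas:
  assumes "range D \<subseteq> sets \<mu>" "decseq D" "\<And>N. emeasure \<mu> (D (Suc N)) = emeasure \<mu> (D N)"
  shows "measure \<mu> (\<Inter>N. D N) = measure \<mu> (D 0)"
proof -
  interpret prob_space \<mu> by (rule probM)
  have c: "measure \<mu> (D N) = measure \<mu> (D 0)" for N
    by (induction N) (use assms(3) in \<open>simp_all add: measure_def\<close>)
  have "(\<lambda>N. measure \<mu> (D N)) \<longlonglongrightarrow> measure \<mu> (\<Inter>N. D N)"
    by (rule finite_Lim_measure_decseq[OF assms(1,2)])
  moreover have "(\<lambda>N. measure \<mu> (D N)) = (\<lambda>N. measure \<mu> (D 0))" by (rule ext, rule c)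
  ultimately have "(\<lambda>N. measure \<mu> (D 0)) \<longlonglongrightarrow> measure \<mu> (\<Inter>N. D N)" by simp
  then show ?thesis using LIMSEQ_unique[OF _ tendsto_const] by metis
qed

lemma one_AE: "S \<in> sets \<mu> \<Longrightarrow> emeasure \<mu> S = 1 \<Longrightarrow> AE x in \<mu>. x \<in> S"
proof -
  assume "S \<in> sets \<mu>" "emeasure \<mu> S = 1"
  interpret prob_space \<mu> by (rule probM)
  have "prob S = 1" using \<open>emeasure \<mu> S = 1\<close> by (simp add: measure_def)
  then show ?thesis by (rule AE_prob_1)
qed

lemma recurrence:
  assumes C: "C \<in> sets \<mu>" "emeasure \<mu> C \<noteq> 0"
  shows "AE x in \<mu>. (\<forall>N::nat. \<exists>b. b \<ge> int N \<and> shift_by b x \<in> C) \<and> (\<forall>N::nat. \<exists>a. a \<le> - int N \<and> shift_by a x \<in> C)"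
proof -
  interpret prob_space \<mu> by (rule probM)
  have CX: "C \<subseteq> X" using sets.sets_into_space[OF C(1)] by simp
  have e1: "shift_by b (shift x) = shift_by (b + 1) x" for b x
    by (simp add: shift_by_add)
  define Rs where "Rs N = {x\<in>X. \<exists>b. b \<ge> int N \<and> shift_by b x \<in> C}" for N :: nat
  define Ls where "Ls N = {x\<in>X. \<exists>a. a \<le> - int N \<and> shift_by a x \<in> C}" for N :: nat
  have Rs_sets: "Rs N \<in> sets \<mu>" for N
  proof -
    have eq: "Rs N = (\<Union>b\<in>{b. b \<ge> int N}. shift_by b -` C \<inter> X)" unfolding Rs_def by auto
    show ?thesis unfolding eq by (rule sets.countable_UN'[OF countableI_type]) (use pre_sets[OF C(1)] in blast)
  qed
  have Ls_sets: "Ls N \<in> sets \<mu>" for N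
  proof -
    have eq: "Ls N = (\<Union>a\<in>{a. a \<le> - int N}. shift_by a -` C \<inter> X)" unfolding Ls_def by auto
    show ?thesis unfolding eq by (rule sets.countable_UN'[OF countableI_type]) (use pre_sets[OF C(1)] in blast)
  qed
  have Rs_shift: "shift -` Rs N \<inter> X = Rs (Suc N)" for N
  proof (intro equalityI subsetI)
    fix x assume "x \<in> shift -` Rs N \<inter> X"
    then obtain b where "x \<in> X" "b \<ge> int N" "shift_by b (shift x) \<in> C" by (auto simp: Rs_def)
    then show "x \<in> Rs (Suc N)" unfolding Rs_def e1 by (intro CollectI conjI exI[of _ "b+1"]) auto
  next
    fix x assume "x \<in> Rs (Suc N)"
    then obtain b where b: "x \<in> X" "b \<ge> int (Suc N)" "shift_by b x \<in> C" by (auto simp: Rs_def)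
    then have "shift_by (b - 1) (shift x) \<in> C" unfolding e1 by simp
    then show "x \<in> shift -` Rs N \<inter> X" using b shift_X unfolding Rs_def
      by (intro IntI vimageI2 CollectI conjI exI[of _ "b-1"]) auto
  qed
  have Ls_shift: "shift -` Ls (Suc N) \<inter> X = Ls N" for N
  proof (intro equalityI subsetI)
    fix x assume "x \<in> shift -` Ls (Suc N) \<inter> X"
    then obtain a where "x \<in> X" "a \<le> - int (Suc N)" "shift_by a (shift x) \<in> C" by (auto simp: Ls_def)
    then show "x \<in> Ls N" unfolding Ls_def e1 by (intro CollectI conjI exI[of _ "a+1"]) auto
  next
    fix x assume "x \<in> Ls N"
    then obtain a where a: "x \<in> X" "a \<le> - int N" "shift_by a x \<in> C" by (auto simp: Ls_def)
    then have "shift_by (a - 1) (shift x) \<in> C" unfolding e1 by simp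
    then show "x \<in> shift -` Ls (Suc N) \<inter> X" using a shift_X unfolding Ls_def
      by (intro IntI vimageI2 CollectI conjI exI[of _ "a-1"]) auto
  qed
  have Rs_dec: "decseq Rs"
  proof (rule decseq_SucI, rule subsetI)
    fix n x assume "x \<in> Rs (Suc n)"
    then obtain b where "x \<in> X" "b \<ge> int (Suc n)" "shift_by b x \<in> C" by (auto simp: Rs_def)
    then show "x \<in> Rs n" unfolding Rs_def by (intro CollectI conjI exI[of _ b]) auto
  qed
  have Ls_dec: "decseq Ls"
  proof (rule decseq_SucI, rule subsetI)
    fix n x assume "x \<in> Ls (Suc n)"
    then obtain a where "x \<in> X" "a \<le> - int (Suc n)" "shift_by a x \<in> C" by (auto simp: Ls_def)
    then show "x \<in> Ls n" unfolding Ls_def by (intro CollectI conjI exI[of _ a]) auto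
  qed
  have CR: "C \<subseteq> Rs 0" unfolding Rs_def using CX by (auto intro!: exI[of _ 0])
  have CL: "C \<subseteq> Ls 0" unfolding Ls_def using CX by (auto intro!: exI[of _ 0])
  have "measure \<mu> C \<noteq> 0" using C(2) by (simp add: emeasure_eq_measure)
  then have Cpos: "measure \<mu> C > 0" using measure_nonneg[of \<mu> C] by linarith
  have mR: "measure \<mu> (\<Inter>N. Rs N) = measure \<mu> (Rs 0)"
  proof (rule dec_meas)
    show "range Rs \<subseteq> sets \<mu>" using Rs_sets by blast
    show "decseq Rs" by (rule Rs_dec)
    fix N
    have "emeasure \<mu> (Rs (Suc N)) = emeasure \<mu> (shift -` Rs N \<inter> X)" unfolding Rs_shift ..
    also have "\<dots> = emeasure \<mu> (Rs N)" by (rule pres[OF Rs_sets])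
    finally show "emeasure \<mu> (Rs (Suc N)) = emeasure \<mu> (Rs N)" .
  qed
  have mL: "measure \<mu> (\<Inter>N. Ls N) = measure \<mu> (Ls 0)"
  proof (rule dec_meas)
    show "range Ls \<subseteq> sets \<mu>" using Ls_sets by blast
    show "decseq Ls" by (rule Ls_dec)
    fix N
    have "emeasure \<mu> (Ls N) = emeasure \<mu> (shift -` Ls (Suc N) \<inter> X)" unfolding Ls_shift ..
    also have "\<dots> = emeasure \<mu> (Ls (Suc N))" by (rule pres[OF Ls_sets])
    finally show "emeasure \<mu> (Ls (Suc N)) = emeasure \<mu> (Ls N)" by simp
  qed
  have IR: "(\<Inter>N. Rs N) \<in> sets \<mu>" using Rs_sets by auto
  have IL: "(\<Inter>N. Ls N) \<in> sets \<mu>" using Ls_sets by auto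
  have IR_inv: "shift -` (\<Inter>N. Rs N) \<inter> X = (\<Inter>N. Rs N)"
  proof (intro equalityI subsetI)
    fix x assume x: "x \<in> shift -` (\<Inter>N. Rs N) \<inter> X"
    then have "x \<in> Rs (Suc N)" for N using Rs_shift[of N] by blast
    moreover have "Rs (Suc 0) \<subseteq> Rs 0" using Rs_dec by (simp add: decseq_Suc_iff)
    ultimately have "x \<in> Rs N" for N by (cases N) auto
    then show "x \<in> (\<Inter>N. Rs N)" by blast
  next
    fix x assume x: "x \<in> (\<Inter>N. Rs N)"
    then have "x \<in> shift -` Rs N \<inter> X" for N using Rs_shift[of N] by blast
    then show "x \<in> shift -` (\<Inter>N. Rs N) \<inter> X" by blast
  qed
  have IL_inv: "shift -` (\<Inter>N. Ls N) \<inter> X = (\<Inter>N. Ls N)"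
  proof (intro equalityI subsetI)
    fix x assume x: "x \<in> shift -` (\<Inter>N. Ls N) \<inter> X"
    then have "x \<in> Ls N" for N using Ls_shift[of N] by blast
    then show "x \<in> (\<Inter>N. Ls N)" by blast
  next
    fix x assume x: "x \<in> (\<Inter>N. Ls N)"
    then have a: "x \<in> shift -` Ls (Suc N) \<inter> X" for N using Ls_shift[of N] by blast
    moreover have "Ls (Suc 0) \<subseteq> Ls 0" using Ls_dec by (simp add: decseq_Suc_iff)
    ultimately have "x \<in> shift -` Ls N \<inter> X" for N by (cases N) auto
    then show "x \<in> shift -` (\<Inter>N. Ls N) \<inter> X" by blast
  qed
  have "measure \<mu> (Rs 0) \<ge> measure \<mu> C" using CR Rs_sets by (intro finite_measure_mono) auto
  then have "measure \<mu> (\<Inter>N. Rs N) > 0" using mR Cpos by simp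
  then have "emeasure \<mu> (\<Inter>N. Rs N) \<noteq> 0" by (simp add: emeasure_eq_measure)
  then have "emeasure \<mu> (\<Inter>N. Rs N) = 1" using erg_one[OF IR IR_inv] by blast
  then have AR: "AE x in \<mu>. x \<in> (\<Inter>N. Rs N)" using one_AE IR by blast
  have "measure \<mu> (Ls 0) \<ge> measure \<mu> C" using CL Ls_sets by (intro finite_measure_mono) auto
  then have "measure \<mu> (\<Inter>N. Ls N) > 0" using mL Cpos by simp
  then have "emeasure \<mu> (\<Inter>N. Ls N) \<noteq> 0" by (simp add: emeasure_eq_measure)
  then have "emeasure \<mu> (\<Inter>N. Ls N) = 1" using erg_one[OF IL IL_inv] by blast
  then have AL: "AE x in \<mu>. x \<in> (\<Inter>N. Ls N)" using one_AE IL by blast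
  show ?thesis using AR AL
    by eventually_elim (auto simp: Rs_def Ls_def)
qed


lemma periodic_cols:
  assumes lo: "\<forall>x\<in>X. \<forall>y\<in>X. \<forall>j. (\<forall>i. \<bar>i - j\<bar> \<le> int \<rho> \<longrightarrow> x i = y i) \<longrightarrow> G x j = G y j"
    and x0: "x0 \<in> X" and blk: "\<forall>y\<in>X. agr m x0 y \<longrightarrow> (\<forall>n. agr \<rho> ((G ^^ n) x0) ((G ^^ n) y))"
    and x: "x \<in> X"
    and rec: "(\<forall>N::nat. \<exists>b. b \<ge> int N \<and> shift_by b x \<in> cyl m x0) \<and> (\<forall>N::nat. \<exists>a. a \<le> - int N \<and> shift_by a x \<in> cyl m x0)"
  shows "\<exists>n0 p. p > 0 \<and> (\<forall>n \<ge> n0. agr R ((G ^^ (n + p)) x) ((G ^^ n) x))"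
proof -
  define Y where "Y n = (G ^^ n) x" for n
  have YX: "Y n \<in> X" for n unfolding Y_def using Gn_X[OF x] .
  have YS: "Y (Suc n) = G (Y n)" for n unfolding Y_def by simp
  obtain a where a: "a \<le> - int R" "shift_by a x \<in> cyl m x0" using rec by blast
  obtain b where b0: "b \<ge> int (nat (max (int R) (a + int \<rho>)))" "shift_by b x \<in> cyl m x0" using rec by blast
  have b: "b \<ge> int R" "b \<ge> a + int \<rho>" using b0(1) by linarith+
  have strip1: "(G ^^ n) x0 i = Y n (i + c)" if "shift_by c x \<in> cyl m x0" "\<bar>i\<bar> \<le> int \<rho>" for c n i
  proof -
    have "agr m x0 (shift_by c x)" "shift_by c x \<in> X" using that(1) by (auto simp: cyl_def)
    then have "agr \<rho> ((G ^^ n) x0) ((G ^^ n) (shift_by c x))" using blk by blast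
    then have "agr \<rho> ((G ^^ n) x0) (shift_by c (Y n))" unfolding Y_def using Gn_shift[OF x] by simp
    then show ?thesis using that(2) by (simp add: agr_def shift_by_def)
  qed
  have strip: "Y n (a + i) = Y n (b + i)" if "\<bar>i\<bar> \<le> int \<rho>" for n i
    using strip1[OF a(2) that, of n] strip1[OF b0(2) that, of n] by (simp add: add.commute)
  define AW where "AW n n' \<longleftrightarrow> (\<forall>j. a - int \<rho> \<le> j \<and> j \<le> b + int \<rho> \<longrightarrow> Y n j = Y n' j)" for n n'
  have step: "AW (Suc n) (Suc n')" if h: "AW n n'" for n n'
  proof -
    have int: "Y (Suc n) j = Y (Suc n') j" if "a \<le> j" "j \<le> b" for j
    proof -
      have "\<forall>i. \<bar>i - j\<bar> \<le> int \<rho> \<longrightarrow> Y n i = Y n' i"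
      proof (intro allI impI)
        fix i assume "\<bar>i - j\<bar> \<le> int \<rho>"
        then have "a - int \<rho> \<le> i \<and> i \<le> b + int \<rho>" using that by linarith
        then show "Y n i = Y n' i" using h unfolding AW_def by blast
      qed
      then have "G (Y n) j = G (Y n') j" using lo YX by blast
      then show ?thesis by (simp add: YS)
    qed
    show ?thesis unfolding AW_def
    proof (intro allI impI)
      fix j assume j: "a - int \<rho> \<le> j \<and> j \<le> b + int \<rho>"
      consider "a \<le> j \<and> j \<le> b" | "j < a" | "b < j" by linarith
      then show "Y (Suc n) j = Y (Suc n') j"
      proof cases
        case 1 then show ?thesis using int by blast
      next
        case 2
        define i where "i = j - a"
        have i: "\<bar>i\<bar> \<le> int \<rho>" using j 2 unfolding i_def by linarith
        have "Y (Suc n) j = Y (Suc n) (b + i)" using strip[OF i, of "Suc n"] by (simp add: i_def)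
        also have "\<dots> = Y (Suc n') (b + i)" using int i b 2 unfolding i_def by auto
        also have "\<dots> = Y (Suc n') j" using strip[OF i, of "Suc n'"] by (simp add: i_def)
        finally show ?thesis .
      next
        case 3
        define i where "i = j - b"
        have i: "\<bar>i\<bar> \<le> int \<rho>" using j 3 unfolding i_def by linarith
        have "Y (Suc n) j = Y (Suc n) (a + i)" using strip[OF i, of "Suc n"] by (simp add: i_def)
        also have "\<dots> = Y (Suc n') (a + i)" using int i b 3 unfolding i_def by auto
        also have "\<dots> = Y (Suc n') j" using strip[OF i, of "Suc n'"] by (simp add: i_def)
        finally show ?thesis .
      qed
    qed
  qed
  have iter: "AW (n + t) (n' + t)" if "AW n n'" for n n' t
    using that by (induction t) (auto intro: step)
  define W where "W = {a - int \<rho>..b + int \<rho>}"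
  define f where "f n = restrict (Y n) W" for n
  have fr: "range f \<subseteq> PiE W (\<lambda>_. A)" unfolding f_def using X_A[OF YX] by auto
  have "finite (PiE W (\<lambda>_. A))" unfolding W_def using finA by (intro finite_PiE) auto
  then have "\<not> inj f" using range_inj_infinite[of f] fr finite_subset by blast
  then obtain n1 n2 where n12: "n1 \<noteq> n2" "f n1 = f n2" unfolding inj_def by blast
  have AWeq: "AW n1 n2" if "f n1 = f n2" for n1 n2
    unfolding AW_def
  proof (intro allI impI)
    fix j assume "a - int \<rho> \<le> j \<and> j \<le> b + int \<rho>"
    then have "j \<in> W" by (simp add: W_def)
    then show "Y n1 j = Y n2 j" using fun_cong[OF that, of j] by (simp add: f_def)
  qed
  have "\<exists>n1 n2. n1 < n2 \<and> AW n1 n2"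
  proof (cases "n1 < n2")
    case True then show ?thesis using AWeq[OF n12(2)] by blast
  next
    case False then have "n2 < n1" using n12(1) by simp
    then show ?thesis using AWeq[OF n12(2)[symmetric]] by blast
  qed
  then obtain p1 p2 where p: "p1 < p2" "AW p1 p2" by blast
  show ?thesis
  proof (intro exI conjI allI impI)
    show "p2 - p1 > 0" using p(1) by simp
    fix n assume n: "n \<ge> p1"
    have "AW (p1 + (n - p1)) (p2 + (n - p1))" by (rule iter[OF p(2)])
    moreover have "p1 + (n - p1) = n" "p2 + (n - p1) = n + (p2 - p1)" using n p(1) by auto
    ultimately have aw: "AW n (n + (p2 - p1))" by simp
    show "agr R ((G ^^ (n + (p2 - p1))) x) ((G ^^ n) x)"
      unfolding agr_def
    proof (intro allI impI)
      fix i assume "\<bar>i\<bar> \<le> int R"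
      then have "a - int \<rho> \<le> i \<and> i \<le> b + int \<rho>" using a(1) b by linarith
      then show "(G ^^ (n + (p2 - p1))) x i = (G ^^ n) x i" using aw unfolding AW_def Y_def by metis
    qed
  qed
qed


lemma agr_iter:
  assumes "\<forall>n\<ge>n0. agr R ((G ^^ (n + p)) x) ((G ^^ n) x)" "n \<ge> n0"
  shows "agr R ((G ^^ (n + q * p)) x) ((G ^^ n) x)"
proof (induction q)
  case 0 then show ?case by simp
next
  case (Suc q)
  have "agr R ((G ^^ (n + q * p + p)) x) ((G ^^ (n + q * p)) x)" using assms by simp
  moreover have "n + Suc q * p = n + q * p + p" by simp
  ultimately show ?case using Suc agr_trans by metis
qed

lemma ae_conv: "AE x in \<mu>. \<forall>f. contf f \<longrightarrow> convergent (\<lambda>n. (1 / real n) * (\<Sum>i<n. f ((G ^^ i) x)))"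
proof -
  obtain \<rho> m x0 where lo: "\<forall>x\<in>X. \<forall>y\<in>X. \<forall>j. (\<forall>i. \<bar>i - j\<bar> \<le> int \<rho> \<longrightarrow> x i = y i) \<longrightarrow> G x j = G y j"
    and x0: "x0 \<in> X" and blk: "\<forall>y\<in>X. agr m x0 y \<longrightarrow> (\<forall>n. agr \<rho> ((G ^^ n) x0) ((G ^^ n) y))"
    and pos: "emeasure \<mu> (cyl m x0) \<noteq> 0"
    using good_block by blast
  have "AE x in \<mu>. (\<forall>N::nat. \<exists>b. b \<ge> int N \<and> shift_by b x \<in> cyl m x0) \<and> (\<forall>N::nat. \<exists>a. a \<le> - int N \<and> shift_by a x \<in> cyl m x0)"
    by (rule recurrence[OF cyl_sets[OF x0] pos])
  moreover have "AE x in \<mu>. x \<in> X" using AE_space[of \<mu>] by simp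
  ultimately show ?thesis
  proof eventually_elim
    case (elim x)
    then have x: "x \<in> X" and rec: "(\<forall>N::nat. \<exists>b. b \<ge> int N \<and> shift_by b x \<in> cyl m x0) \<and> (\<forall>N::nat. \<exists>a. a \<le> - int N \<and> shift_by a x \<in> cyl m x0)"
      by auto
    show ?case
    proof (intro allI impI)
      fix f assume f: "contf f"
      define u where "u i = f ((G ^^ i) x)" for i
      have "convergent (\<lambda>n. (1 / real n) * (\<Sum>i<n. u i))"
      proof (rule ces_approx)
        fix e :: real assume e: "e > 0"
        obtain R where R: "\<forall>y\<in>X. \<forall>z\<in>X. agr R y z \<longrightarrow> \<bar>f y - f z\<bar> < e"
          using unif_cont[OF compX X_sub f e] by blast
        obtain n0 p where np: "p > 0" "\<forall>n\<ge>n0. agr R ((G ^^ (n + p)) x) ((G ^^ n) x)"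
          using periodic_cols[OF lo x0 blk x rec] by blast
        define v where "v i = (if i < n0 then u i else u (n0 + (i - n0) mod p))" for i
        show "\<exists>v n0 p. p > 0 \<and> (\<forall>n\<ge>n0. v (n + p) = v n) \<and> (\<forall>i. \<bar>u i - v i\<bar> \<le> e)"
        proof (intro exI conjI allI impI)
          show "p > 0" by (rule np(1))
          fix n assume n: "n \<ge> n0"
          have "n + p - n0 = (n - n0) + p" using n by simp
          then have "(n + p - n0) mod p = (n - n0) mod p" by simp
          then show "v (n + p) = v n" unfolding v_def using n by simp
        next
          fix i
          show "\<bar>u i - v i\<bar> \<le> e"
          proof (cases "i < n0")
            case True then show ?thesis using e by (simp add: v_def)
          next
            case False
            define r where "r = (i - n0) mod p"
            define q where "q = (i - n0) div p"
            have ieq: "i = (n0 + r) + q * p" unfolding r_def q_def using False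
              by (simp add: add.commute)
            have "agr R ((G ^^ ((n0 + r) + q * p)) x) ((G ^^ (n0 + r)) x)"
              by (rule agr_iter[OF np(2)]) simp
            then have "\<bar>f ((G ^^ i) x) - f ((G ^^ (n0 + r)) x)\<bar> < e"
              using R Gn_X[OF x] ieq by metis
            then show ?thesis using False by (simp add: u_def v_def r_def)
          qed
        qed
      qed
      then show "convergent (\<lambda>n. (1 / real n) * (\<Sum>i<n. f ((G ^^ i) x)))" by (simp add: u_def)
    qed
  qed
qed

lemma main_conv: "contf f \<Longrightarrow> convergent (ces f)"
proof -
  assume f: "contf f"
  interpret prob_space \<mu> by (rule probM)
  obtain B where B: "\<forall>x\<in>X. \<bar>f x\<bar> \<le> B" using bounded_cont[OF compX f] by blast
  define s where "s n x = (1 / real n) * (\<Sum>i<n. f ((G ^^ i) x))" for n x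
  have fi: "contf (\<lambda>x. f ((G ^^ i) x))" for i by (rule contf_comp[OF f cont_Gn])
  have sm: "s n \<in> borel_measurable \<mu>" for n
  proof -
    have "(\<lambda>x. \<Sum>i<n. f ((G ^^ i) x)) \<in> borel_measurable \<mu>"
      by (rule borel_measurable_sum) (rule meas_f[OF fi])
    then show ?thesis unfolding s_def by simp
  qed
  have gm: "(\<lambda>x. lim (\<lambda>n. s n x)) \<in> borel_measurable \<mu>"
    by (rule borel_measurable_lim_metric[OF sm])
  have lim: "AE x in \<mu>. (\<lambda>n. s n x) \<longlonglongrightarrow> lim (\<lambda>n. s n x)"
    using ae_conv
  proof eventually_elim
    case (elim x)
    then have "convergent (\<lambda>n. s n x)" unfolding s_def using f by blast
    then show ?case by (simp add: convergent_LIMSEQ_iff)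
  qed
  have bnd: "AE x in \<mu>. norm (s n x) \<le> \<bar>B\<bar>" for n
  proof -
    have "norm (s n x) \<le> \<bar>B\<bar>" if x: "x \<in> X" for x
    proof (cases "n = 0")
      case True then show ?thesis by (simp add: s_def)
    next
      case False
      have "\<bar>\<Sum>i<n. f ((G ^^ i) x)\<bar> \<le> (\<Sum>i<n. \<bar>f ((G ^^ i) x)\<bar>)" by (rule sum_abs)
      also have "\<dots> \<le> (\<Sum>i<n. \<bar>B\<bar>)"
      proof (rule sum_mono)
        fix i assume "i \<in> {..<n}"
        have "\<bar>f ((G ^^ i) x)\<bar> \<le> B" using B Gn_X[OF x] by blast
        then show "\<bar>f ((G ^^ i) x)\<bar> \<le> \<bar>B\<bar>" by linarith
      qed
      also have "\<dots> = real n * \<bar>B\<bar>" by simp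
      finally have h: "\<bar>\<Sum>i<n. f ((G ^^ i) x)\<bar> \<le> real n * \<bar>B\<bar>" .
      have "norm (s n x) = \<bar>\<Sum>i<n. f ((G ^^ i) x)\<bar> / real n" by (simp add: s_def abs_divide)
      also have "\<dots> \<le> real n * \<bar>B\<bar> / real n" using h by (intro divide_right_mono) auto
      also have "\<dots> = \<bar>B\<bar>" using False by simp
      finally show ?thesis .
    qed
    then show ?thesis by (intro AE_I2) simp
  qed
  have "(\<lambda>n. integral\<^sup>L \<mu> (s n)) \<longlonglongrightarrow> integral\<^sup>L \<mu> (\<lambda>x. lim (\<lambda>n. s n x))"
    by (rule integral_dominated_convergence[OF gm sm _ lim bnd]) simp
  moreover have "integral\<^sup>L \<mu> (s n) = ces f n" for n
  proof -
    have "integral\<^sup>L \<mu> (s n) = (1 / real n) * (\<integral>x. (\<Sum>i<n. f ((G ^^ i) x)) \<partial>\<mu>)"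
      unfolding s_def by (rule integral_mult_right_zero)
    also have "(\<integral>x. (\<Sum>i<n. f ((G ^^ i) x)) \<partial>\<mu>) = (\<Sum>i<n. \<integral>x. f ((G ^^ i) x) \<partial>\<mu>)"
      by (rule Bochner_Integration.integral_sum[where I="{..<n}" and f="\<lambda>i x. f ((G ^^ i) x)"]) (rule int_f[OF fi])
    finally show ?thesis using ces_G[OF f] by simp
  qed
  ultimately show ?thesis by (auto intro: convergentI)
qed


definition CO where "CO = {S. S \<subseteq> X \<and> openin TX S \<and> closedin TX S}"

lemma CO_open: "S \<in> CO \<Longrightarrow> openin TX S" by (simp add: CO_def)
lemma CO_closed: "S \<in> CO \<Longrightarrow> closedin TX S" by (simp add: CO_def)
lemma CO_sub: "S \<in> CO \<Longrightarrow> S \<subseteq> X" by (simp add: CO_def)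

lemma CO_ring: "ring_of_sets X CO"
proof (rule ring_of_setsI)
  show "CO \<subseteq> Pow X" by (auto simp: CO_def)
  show "{} \<in> CO" by (simp add: CO_def)
  fix a b assume a: "a \<in> CO" and b: "b \<in> CO"
  show "a \<union> b \<in> CO" using a b by (auto simp: CO_def intro: openin_Un closedin_Un)
  show "a - b \<in> CO" using a b by (auto simp: CO_def intro: openin_diff closedin_diff)
qed

lemma CO_X: "X \<in> CO"
proof -
  have "openin TX X" using openin_topspace[of TX] unfolding topTX .
  moreover have "closedin TX X" using closedin_topspace[of TX] unfolding topTX .
  ultimately show ?thesis unfolding CO_def by blast
qed

lemma CO_Int: "a \<in> CO \<Longrightarrow> b \<in> CO \<Longrightarrow> a \<inter> b \<in> CO"
  by (auto simp: CO_def intro: openin_Int closedin_Int)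

lemma cyl_CO: "x \<in> X \<Longrightarrow> cyl m x \<in> CO"
  unfolding CO_def using cyl_openX cyl_closedX by (auto simp: cyl_def)

lemma contf_ind: "S \<in> CO \<Longrightarrow> contf (indicator S)"
proof -
  assume S: "S \<in> CO"
  show ?thesis unfolding continuous_map
  proof (intro conjI allI impI)
    show "indicator S ` topspace TX \<subseteq> topspace euclideanreal" by simp
    fix U :: "real set" assume "openin euclideanreal U"
    have eq: "{x \<in> topspace TX. indicator S x \<in> U} =
      (if (1::real) \<in> U then (if (0::real) \<in> U then X else S) else (if (0::real) \<in> U then X - S else {}))"
      using CO_sub[OF S] X_sub by (auto simp: indicator_def)
    have "openin TX (topspace TX - S)" by (rule openin_diff[OF openin_topspace CO_closed[OF S]])
    then have o1: "openin TX (X - S)" unfolding topTX .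
    have o2: "openin TX X" using openin_topspace[of TX] unfolding topTX .
    show "openin TX {x \<in> topspace TX. indicator S x \<in> U}"
      unfolding eq using CO_open[OF S] o1 o2 by simp
  qed
qed

definition L where "L f = lim (ces f)"

lemma ces_L: "contf f \<Longrightarrow> ces f \<longlonglongrightarrow> L f"
  unfolding L_def using main_conv convergent_LIMSEQ_iff by blast

lemma ces_add: "contf f \<Longrightarrow> contf g \<Longrightarrow> ces (\<lambda>x. f x + g x) n = ces f n + ces g n"
proof -
  assume f: "contf f" and g: "contf g"
  have fg: "contf (\<lambda>x. f x + g x)" using continuous_map_add[OF f g] .
  have "(\<integral>x. f ((G ^^ i) x) + g ((G ^^ i) x) \<partial>\<mu>) = (\<integral>x. f ((G ^^ i) x) \<partial>\<mu>) + (\<integral>x. g ((G ^^ i) x) \<partial>\<mu>)" for i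
    by (rule Bochner_Integration.integral_add) (rule int_f[OF contf_comp[OF _ cont_Gn]], fact)+
  then show ?thesis unfolding ces_G[OF fg] ces_G[OF f] ces_G[OF g]
    by (simp add: sum.distrib distrib_left)
qed

lemma ces_cmult: "contf f \<Longrightarrow> ces (\<lambda>x. c * f x) n = c * ces f n"
proof -
  assume f: "contf f"
  have cf: "contf (\<lambda>x. c * f x)" using continuous_map_real_mult_left[OF f] .
  show ?thesis unfolding ces_G[OF cf] ces_G[OF f] by (simp add: sum_distrib_left)
qed

lemma ces_sum: "finite U \<Longrightarrow> (\<And>u. u \<in> U \<Longrightarrow> contf (h u)) \<Longrightarrow>
    ces (\<lambda>x. \<Sum>u\<in>U. h u x) n = (\<Sum>u\<in>U. ces (h u) n)"
proof (induction U rule: finite_induct)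
  case empty
  have "ces (\<lambda>x. 0) n = 0" by (simp add: ces_def)
  then show ?case by simp
next
  case (insert u U)
  have c1: "contf (h u)" using insert by simp
  have c2: "contf (\<lambda>x. \<Sum>u\<in>U. h u x)" using insert by (intro continuous_map_sum) auto
  have "ces (\<lambda>x. \<Sum>u\<in>insert u U. h u x) n = ces (\<lambda>x. h u x + (\<Sum>u\<in>U. h u x)) n"
    using insert by simp
  also have "\<dots> = ces (h u) n + ces (\<lambda>x. \<Sum>u\<in>U. h u x) n" using ces_add[OF c1 c2] by simp
  finally show ?case using insert by simp
qed

lemma ces_nonneg: "contf f \<Longrightarrow> (\<And>x. x \<in> X \<Longrightarrow> f x \<ge> 0) \<Longrightarrow> ces f n \<ge> 0"
proof -
  assume f: "contf f" and nn: "\<And>x. x \<in> X \<Longrightarrow> f x \<ge> 0"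
  have "(\<integral>x. f ((G ^^ i) x) \<partial>\<mu>) \<ge> 0" for i
    by (rule Bochner_Integration.integral_nonneg) (use nn Gn_X in auto)
  then show ?thesis unfolding ces_G[OF f] by (intro mult_nonneg_nonneg sum_nonneg) auto
qed

lemma L_nonneg: "contf f \<Longrightarrow> (\<And>x. x \<in> X \<Longrightarrow> f x \<ge> 0) \<Longrightarrow> L f \<ge> 0"
  using LIMSEQ_le_const[OF ces_L] ces_nonneg by blast

lemma L_ind_X: "L (indicator X) = 1"
proof -
  have c: "contf (indicator X)" by (rule contf_ind[OF CO_X])
  have "ces (indicator X) n = 1" if "n \<ge> 1" for n
  proof -
    interpret prob_space \<mu> by (rule probM)
    have "(\<integral>x. indicator X ((G ^^ i) x) \<partial>\<mu>) = (1::real)" for i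
    proof -
      have "(\<integral>x. indicator X ((G ^^ i) x) \<partial>\<mu>) = (\<integral>x. 1 \<partial>\<mu>)"
        by (intro Bochner_Integration.integral_cong refl) (simp add: Gn_X)
      also have "(\<integral>x. (1::real) \<partial>\<mu>) = measure \<mu> (space \<mu>) *\<^sub>R 1" by (rule lebesgue_integral_const)
      also have "\<dots> = 1" using prob_space.prob_space[OF probM] by simp
      finally show ?thesis .
    qed
    then show ?thesis unfolding ces_G[OF c] using that by simp
  qed
  then have "\<forall>\<^sub>F n in sequentially. 1 = ces (indicator X) n" by (auto intro: eventually_sequentiallyI)
  then have "ces (indicator X) \<longlonglongrightarrow> 1" using Lim_transform_eventually[OF tendsto_const] by blast
  then show ?thesis using LIMSEQ_unique[OF ces_L[OF c]] by simp
qed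

definition mu0 where "mu0 S = ennreal (L (indicator S))"

lemma L_ind_nonneg: "S \<in> CO \<Longrightarrow> L (indicator S) \<ge> 0"
  by (rule L_nonneg[OF contf_ind]) auto

lemma L_ind_add: "a \<in> CO \<Longrightarrow> b \<in> CO \<Longrightarrow> a \<inter> b = {} \<Longrightarrow> L (indicator (a \<union> b)) = L (indicator a) + L (indicator b)"
proof -
  assume a: "a \<in> CO" and b: "b \<in> CO" and d: "a \<inter> b = {}"
  have e: "indicator (a \<union> b) = (\<lambda>x. indicator a x + indicator b x :: real)"
    using d by (auto simp: indicator_def fun_eq_iff)
  have "ces (indicator (a \<union> b)) = (\<lambda>n. ces (indicator a) n + ces (indicator b) n)"
    unfolding e by (rule ext) (rule ces_add[OF contf_ind[OF a] contf_ind[OF b]])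
  moreover have "(\<lambda>n. ces (indicator a) n + ces (indicator b) n) \<longlonglongrightarrow> L (indicator a) + L (indicator b)"
    by (intro tendsto_add ces_L contf_ind a b)
  ultimately show ?thesis
    using LIMSEQ_unique[OF ces_L[OF contf_ind[OF ring_of_sets.Un[OF CO_ring a b]]]] by simp
qed

lemma L_zero: "L (\<lambda>x. 0) = 0"
proof -
  have c: "contf (\<lambda>x. 0)" by simp
  have "ces (\<lambda>x. 0) = (\<lambda>n. 0)" by (rule ext) (simp add: ces_def)
  then show ?thesis using LIMSEQ_unique[OF ces_L[OF c]] by simp
qed

lemma mu0_empty[simp]: "mu0 {} = 0"
proof -
  have e: "indicator {} = (\<lambda>x. 0::real)" by (rule ext) simp
  show ?thesis unfolding mu0_def e L_zero by simp
qed

lemma mu0_positive: "positive CO mu0"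
  unfolding positive_def by simp

lemma mu0_additive: "additive CO mu0"
  unfolding additive_def
proof (intro ballI impI)
  fix a b assume a: "a \<in> CO" and b: "b \<in> CO" and d: "a \<inter> b = {}"
  have "mu0 (a \<union> b) = ennreal (L (indicator a) + L (indicator b))"
    unfolding mu0_def using L_ind_add[OF a b d] by simp
  also have "\<dots> = mu0 a + mu0 b"
    unfolding mu0_def by (rule ennreal_plus) (use L_ind_nonneg a b in auto)
  finally show "mu0 (a \<union> b) = mu0 a + mu0 b" .
qed

lemma CO_finite_family:
  fixes Af :: "nat \<Rightarrow> (int \<Rightarrow> 'a) set"
  assumes Af: "range Af \<subseteq> CO" "disjoint_family Af" "(\<Union>i. Af i) \<in> CO"
  shows "\<exists>N. \<forall>i\<ge>N. Af i = {}"
proof -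
  have csp: "compact_space TX" by (rule compact_space_subtopology[OF compX])
  have "compactin TX (\<Union>i. Af i)" by (rule closedin_compact_space[OF csp CO_closed[OF Af(3)]])
  moreover have "\<forall>B\<in>range Af. openin TX B" using Af(1) CO_open by blast
  ultimately obtain FF where FF: "finite FF" "FF \<subseteq> range Af" "(\<Union>i. Af i) \<subseteq> \<Union>FF"
  proof -
    assume c: "compactin TX (\<Union>i. Af i)" and o: "\<forall>B\<in>range Af. openin TX B"
      and th: "\<And>FF. finite FF \<Longrightarrow> FF \<subseteq> range Af \<Longrightarrow> (\<Union>i. Af i) \<subseteq> \<Union>FF \<Longrightarrow> thesis"
    have "\<forall>U. (\<forall>B\<in>U. openin TX B) \<and> (\<Union>i. Af i) \<subseteq> \<Union>U \<longrightarrow> (\<exists>F. finite F \<and> F \<subseteq> U \<and> (\<Union>i. Af i) \<subseteq> \<Union>F)"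
      using c unfolding compactin_def by (elim conjE) assumption
    then have "\<exists>F. finite F \<and> F \<subseteq> range Af \<and> (\<Union>i. Af i) \<subseteq> \<Union>F" using o by blast
    then show thesis using th by blast
  qed
  obtain I where I: "finite I" "FF = Af ` I" using finite_subset_image[OF FF(1,2)] by blast
  define N where "N = Suc (Max (insert 0 I))"
  show ?thesis
  proof (intro exI allI impI)
    fix i assume i: "N \<le> i"
    have iI: "i \<notin> I"
    proof
      assume "i \<in> I"
      then have "i \<le> Max (insert 0 I)" using I(1) by simp
      then show False using i N_def by simp
    qed
    show "Af i = {}"
    proof (rule ccontr)
      assume "Af i \<noteq> {}"
      then obtain x where x: "x \<in> Af i" by blast
      then have "x \<in> \<Union>FF" using FF(3) by blast
      then obtain j where j: "j \<in> I" "x \<in> Af j" using I(2) by blast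
      then have "i \<noteq> j" using iI by blast
      then have "Af i \<inter> Af j = {}" using Af(2) by (simp add: disjoint_family_on_def)
      then show False using x j by blast
    qed
  qed
qed

lemma mu0_ca: "countably_additive CO mu0"
  unfolding countably_additive_def
proof (intro allI impI)
  fix Af :: "nat \<Rightarrow> (int \<Rightarrow> 'a) set"
  assume Af: "range Af \<subseteq> CO" "disjoint_family Af" "(\<Union>i. Af i) \<in> CO"
  obtain N where N: "\<forall>i\<ge>N. Af i = {}" using CO_finite_family[OF Af] by blast
  have "(\<Sum>i. mu0 (Af i)) = (\<Sum>i<N. mu0 (Af i))"
    by (rule suminf_finite) (use N in auto)
  also have "\<dots> = mu0 (\<Union>i<N. Af i)"
  proof (rule ring_of_sets.additive_sum[OF CO_ring mu0_positive mu0_additive])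
    show "finite {..<N}" by simp
    show "Af ` {..<N} \<subseteq> CO" using Af(1) by blast
    show "disjoint_family_on Af {..<N}" using Af(2) disjoint_family_on_mono[of "{..<N}" UNIV Af] by blast
  qed
  also have "(\<Union>i<N. Af i) = (\<Union>i. Af i)"
  proof (intro equalityI subsetI)
    fix x assume "x \<in> (\<Union>i. Af i)"
    then obtain i where i: "x \<in> Af i" by blast
    then have "i < N" using N by (metis empty_iff not_le)
    then show "x \<in> (\<Union>i<N. Af i)" using i by blast
  qed blast
  finally show "(\<Sum>i. mu0 (Af i)) = mu0 (\<Union>i. Af i)" .
qed


lemma sigma_CO: "sigma_sets X CO = borel_sets_on A X"
proof
  show "sigma_sets X CO \<subseteq> borel_sets_on A X"
    unfolding borel_sets_on_def by (rule sigma_sets_subseteq) (auto simp: CO_def)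
  show "borel_sets_on A X \<subseteq> sigma_sets X CO"
    unfolding borel_sets_on_def
  proof (rule sigma_sets_mono, rule subsetI)
    fix U assume "U \<in> {U. openin TX U}"
    then have U: "openin TX U" by simp
    have UX: "U \<subseteq> X" using openin_subset[OF U] by simp
    define V where "V m = \<Union>(cyl m ` {x\<in>U. cyl m x \<subseteq> U})" for m
    have VCO: "V m \<in> CO" for m
    proof -
      have "finite (cyl m ` {x\<in>U. cyl m x \<subseteq> U})"
        by (rule finite_subset[OF _ finite_cyls[of m]]) (use UX in blast)
      moreover have "cyl m ` {x\<in>U. cyl m x \<subseteq> U} \<subseteq> CO" using cyl_CO UX by blast
      ultimately show ?thesis unfolding V_def by (rule ring_of_sets.finite_Union[OF CO_ring])
    qed
    have "U = (\<Union>m. V m)"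
    proof (intro equalityI subsetI)
      fix x assume x: "x \<in> U"
      then obtain m where m: "\<forall>y\<in>X. agr m x y \<longrightarrow> y \<in> U" using nbhd[OF U x X_sub] by blast
      then have "cyl m x \<subseteq> U" by (auto simp: cyl_def)
      moreover have "x \<in> cyl m x" using x UX by (auto simp: cyl_def)
      ultimately have "x \<in> V m" unfolding V_def using x by blast
      then show "x \<in> (\<Union>m. V m)" by blast
    next
      fix x assume "x \<in> (\<Union>m. V m)"
      then show "x \<in> U" unfolding V_def by blast
    qed
    moreover have "(\<Union>m. V m) \<in> sigma_sets X CO"
      by (rule sigma_sets.Union) (rule sigma_sets.Basic[OF VCO])
    ultimately show "U \<in> sigma_sets X CO" by simp
  qed
qed

lemma exists_muc: "\<exists>Mc. sets Mc = borel_sets_on A X \<and> space Mc = X \<and> (\<forall>S\<in>CO. emeasure Mc S = mu0 S)"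
proof -
  obtain m' where m': "\<forall>s\<in>CO. m' s = mu0 s" "measure_space X (sigma_sets X CO) m'"
    using ring_of_sets.caratheodory'[OF CO_ring mu0_positive mu0_ca] by blast
  have sa: "sigma_algebra X (sigma_sets X CO)" and pos: "positive (sigma_sets X CO) m'"
    and ca: "countably_additive (sigma_sets X CO) m'"
    using m'(2) by (auto simp: measure_space_def)
  define Mc where "Mc = measure_of X (sigma_sets X CO) m'"
  have "sets Mc = sigma_sets X CO" unfolding Mc_def using sigma_algebra.sets_measure_of_eq[OF sa] .
  moreover have "space Mc = X" unfolding Mc_def using sigma_algebra.space_measure_of_eq[OF sa] .
  moreover have "emeasure Mc S = mu0 S" if "S \<in> CO" for S
    unfolding Mc_def using emeasure_measure_of_sigma[OF sa pos ca sigma_sets.Basic[OF that]] m'(1) that by simp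
  ultimately show ?thesis using sigma_CO by blast
qed

lemma int_gen: "prob_space M \<Longrightarrow> space M = X \<Longrightarrow> sets M = borel_sets_on A X \<Longrightarrow> contf f \<Longrightarrow> integrable M f"
proof -
  assume M: "prob_space M" "space M = X" "sets M = borel_sets_on A X" and f: "contf f"
  obtain B where B: "\<forall>x\<in>X. \<bar>f x\<bar> \<le> B" using bounded_cont[OF compX f] by blast
  interpret prob_space M by (rule M(1))
  show ?thesis
    by (rule integrable_const_bound[where B=B]) (use B meas_real[OF M(2,3) X_sub f] M(2) in auto)
qed

lemma abs_int_le:
  fixes h :: "_ \<Rightarrow> real"
  assumes "prob_space M" "integrable M h" "\<And>x. x \<in> space M \<Longrightarrow> \<bar>h x\<bar> \<le> e"
  shows "\<bar>integral\<^sup>L M h\<bar> \<le> e"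
proof -
  interpret prob_space M by (rule assms(1))
  have "\<bar>integral\<^sup>L M h\<bar> \<le> (\<integral>x. \<bar>h x\<bar> \<partial>M)"
    using integral_norm_bound[of M h] by simp
  also have "\<dots> \<le> (\<integral>x. e \<partial>M)"
    by (rule integral_mono) (use assms in auto)
  also have "\<dots> = e" by (simp add: prob_space)
  finally show ?thesis .
qed

lemma ces_diff: "contf f \<Longrightarrow> contf g \<Longrightarrow> ces (\<lambda>x. f x - g x) n = ces f n - ces g n"
proof -
  assume f: "contf f" and g: "contf g"
  have fg: "contf (\<lambda>x. f x - g x)" using continuous_map_diff[OF f g] .
  have "(\<integral>x. f ((G ^^ i) x) - g ((G ^^ i) x) \<partial>\<mu>) = (\<integral>x. f ((G ^^ i) x) \<partial>\<mu>) - (\<integral>x. g ((G ^^ i) x) \<partial>\<mu>)" for i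
    by (rule Bochner_Integration.integral_diff) (rule int_f[OF contf_comp[OF _ cont_Gn]], fact)+
  then show ?thesis unfolding ces_G[OF fg] ces_G[OF f] ces_G[OF g]
    by (simp add: sum_subtractf right_diff_distrib)
qed

lemma ces_bound: "contf h \<Longrightarrow> (\<And>x. x \<in> X \<Longrightarrow> \<bar>h x\<bar> \<le> e) \<Longrightarrow> \<bar>ces h n\<bar> \<le> e"
proof -
  assume h: "contf h" and b: "\<And>x. x \<in> X \<Longrightarrow> \<bar>h x\<bar> \<le> e"
  have ib: "\<bar>\<integral>x. h ((G ^^ i) x) \<partial>\<mu>\<bar> \<le> e" for i
    by (rule abs_int_le[OF probM int_f[OF contf_comp[OF h cont_Gn]]]) (use b Gn_X in auto)
  show ?thesis
  proof (cases "n = 0")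
    case True
    have "0 \<le> e" using ib[of 0] by linarith
    then show ?thesis using True by (simp add: ces_def)
  next
    case False
    have "\<bar>\<Sum>i<n. \<integral>x. h ((G ^^ i) x) \<partial>\<mu>\<bar> \<le> (\<Sum>i<n. \<bar>\<integral>x. h ((G ^^ i) x) \<partial>\<mu>\<bar>)" by (rule sum_abs)
    also have "\<dots> \<le> (\<Sum>i<n. e)" using ib by (intro sum_mono) auto
    also have "\<dots> = real n * e" by simp
    finally have hh: "\<bar>\<Sum>i<n. \<integral>x. h ((G ^^ i) x) \<partial>\<mu>\<bar> \<le> real n * e" .
    have "\<bar>ces h n\<bar> = \<bar>\<Sum>i<n. \<integral>x. h ((G ^^ i) x) \<partial>\<mu>\<bar> / real n"
      unfolding ces_G[OF h] by (simp add: abs_mult)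
    also have "\<dots> \<le> real n * e / real n" using hh by (intro divide_right_mono) auto
    also have "\<dots> = e" using False by simp
    finally show ?thesis .
  qed
qed


lemma L_lip: "contf f \<Longrightarrow> contf g \<Longrightarrow> (\<And>x. x \<in> X \<Longrightarrow> \<bar>f x - g x\<bar> \<le> e) \<Longrightarrow> \<bar>L f - L g\<bar> \<le> e"
proof -
  assume f: "contf f" and g: "contf g" and b: "\<And>x. x \<in> X \<Longrightarrow> \<bar>f x - g x\<bar> \<le> e"
  have fg: "contf (\<lambda>x. f x - g x)" using continuous_map_diff[OF f g] .
  have "\<bar>ces f n - ces g n\<bar> \<le> e" for n
    using ces_bound[OF fg b] ces_diff[OF f g] by simp
  moreover have "(\<lambda>n. \<bar>ces f n - ces g n\<bar>) \<longlonglongrightarrow> \<bar>L f - L g\<bar>"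
    by (intro tendsto_rabs tendsto_diff ces_L f g)
  ultimately show ?thesis using LIMSEQ_le_const2 by blast
qed

lemma int_eq:
  assumes M: "prob_space Mc" "space Mc = X" "sets Mc = borel_sets_on A X"
    and hML: "\<And>S. S \<in> CO \<Longrightarrow> measure Mc S = L (indicator S)"
    and f: "contf f"
  shows "integral\<^sup>L Mc f = L f"
proof -
  have key: "\<bar>integral\<^sup>L Mc f - L f\<bar> \<le> 2 * e" if e: "e > 0" for e
  proof -
    obtain Mm where Mm: "\<forall>y\<in>X. \<forall>z\<in>X. agr Mm y z \<longrightarrow> \<bar>f y - f z\<bar> < e"
      using unif_cont[OF compX X_sub f e] by blast
    define I where "I = {- int Mm..int Mm}"
    define P where "P = PiE I (\<lambda>_. A)"
    define K where "K u = {y\<in>X. \<forall>i\<in>I. y i = u i}" for u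
    define rep where "rep u = (SOME y. y \<in> K u)" for u
    define g where "g y = (\<Sum>u\<in>P. f (rep u) * indicator (K u) y)" for y
    have finP: "finite P" unfolding P_def I_def using finA by (intro finite_PiE) auto
    have KCO: "K u \<in> CO" for u
    proof (cases "K u = {}")
      case True then show ?thesis by (simp add: CO_def)
    next
      case False
      then obtain y where y: "y \<in> K u" by blast
      have "K u = cyl Mm y"
        using y unfolding K_def cyl_def agr_def I_def by (auto simp: abs_le_iff)
      then show ?thesis using cyl_CO y K_def by auto
    qed
    have gc: "contf g" unfolding g_def
      by (intro continuous_map_sum finP continuous_map_real_mult_left contf_ind KCO)
    have gf: "\<bar>f y - g y\<bar> \<le> e" if y: "y \<in> X" for y
    proof -
      define r where "r = restrict y I"
      have rP: "r \<in> P" unfolding r_def P_def using X_A[OF y] by simp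
      have ind: "indicator (K u) y = (if u = r then 1 else (0::real))" if "u \<in> P" for u
      proof -
        have "y \<in> K u \<longleftrightarrow> u = r"
        proof
          assume "y \<in> K u"
          then have "\<forall>i\<in>I. y i = u i" by (simp add: K_def)
          moreover have "u \<in> extensional I" using that by (simp add: P_def PiE_def)
          ultimately show "u = r" unfolding r_def by (auto simp: restrict_def extensional_def)
        next
          assume "u = r" then show "y \<in> K u" using y by (simp add: K_def r_def)
        qed
        then show ?thesis by (simp add: indicator_def)
      qed
      have "g y = (\<Sum>u\<in>P. if u = r then f (rep u) else 0)"
        unfolding g_def by (rule sum.cong) (simp_all add: ind)
      also have "\<dots> = f (rep r)" using finP rP by simp
      finally have gy: "g y = f (rep r)" .
      have "y \<in> K r" using y by (simp add: K_def r_def)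
      then have "rep r \<in> K r" unfolding rep_def by (rule someI[where P="\<lambda>z. z \<in> K r"])
      then have "agr Mm y (rep r)" "rep r \<in> X"
        unfolding K_def r_def agr_def I_def by (auto simp: abs_le_iff)
      then have "\<bar>f y - f (rep r)\<bar> < e" using Mm y by blast
      then show ?thesis using gy by simp
    qed
    have Lg: "L g = integral\<^sup>L Mc g"
    proof -
      have "ces g = (\<lambda>n. \<Sum>u\<in>P. f (rep u) * ces (indicator (K u)) n)"
        unfolding g_def
        by (rule ext, subst ces_sum[OF finP])
           (auto intro: continuous_map_real_mult_left contf_ind KCO simp: ces_cmult[OF contf_ind[OF KCO]])
      moreover have "(\<lambda>n. \<Sum>u\<in>P. f (rep u) * ces (indicator (K u)) n) \<longlonglongrightarrow> (\<Sum>u\<in>P. f (rep u) * L (indicator (K u)))"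
        by (intro tendsto_sum tendsto_mult_left ces_L contf_ind KCO)
      ultimately have "L g = (\<Sum>u\<in>P. f (rep u) * L (indicator (K u)))"
        using LIMSEQ_unique[OF ces_L[OF gc]] by simp
      also have "\<dots> = (\<Sum>u\<in>P. f (rep u) * measure Mc (K u))" using hML[OF KCO] by simp
      also have "\<dots> = integral\<^sup>L Mc g"
      proof -
        have "integral\<^sup>L Mc g = (\<Sum>u\<in>P. integral\<^sup>L Mc (\<lambda>y. f (rep u) * indicator (K u) y))"
          unfolding g_def
          by (rule Bochner_Integration.integral_sum[where I=P and f="\<lambda>u y. f (rep u) * indicator (K u) y"])
             (rule int_gen[OF M], intro continuous_map_real_mult_left contf_ind KCO)
        also have "\<dots> = (\<Sum>u\<in>P. f (rep u) * measure Mc (K u))"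
        proof (rule sum.cong[OF refl])
          fix u
          have "K u \<subseteq> X" using CO_sub[OF KCO] .
          then show "integral\<^sup>L Mc (\<lambda>y. f (rep u) * indicator (K u) y) = f (rep u) * measure Mc (K u)"
            using M(2) by (simp add: Int_absorb2)
        qed
        finally show ?thesis by simp
      qed
      finally show ?thesis .
    qed
    have "\<bar>L f - L g\<bar> \<le> e" by (rule L_lip[OF f gc gf])
    moreover have "\<bar>integral\<^sup>L Mc f - integral\<^sup>L Mc g\<bar> \<le> e"
    proof -
      have "integral\<^sup>L Mc f - integral\<^sup>L Mc g = integral\<^sup>L Mc (\<lambda>x. f x - g x)"
        using int_gen[OF M f] int_gen[OF M gc] by simp
      moreover have "\<bar>integral\<^sup>L Mc (\<lambda>x. f x - g x)\<bar> \<le> e"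
        by (rule abs_int_le[OF M(1)]) (use int_gen[OF M f] int_gen[OF M gc] gf M(2) in auto)
      ultimately show ?thesis by simp
    qed
    ultimately show ?thesis using Lg by linarith
  qed
  show ?thesis
  proof (rule ccontr)
    assume ne: "integral\<^sup>L Mc f \<noteq> L f"
    define d where "d = \<bar>integral\<^sup>L Mc f - L f\<bar>"
    have "d > 0" using ne by (simp add: d_def)
    then have "d \<le> 2 * (d / 4)" using key[of "d/4"] by (simp add: d_def)
    then show False using \<open>d > 0\<close> by linarith
  qed
qed


lemma ces_cong: "contf f \<Longrightarrow> contf g \<Longrightarrow> (\<And>x. x \<in> X \<Longrightarrow> f x = g x) \<Longrightarrow> ces f = ces g"
proof -
  assume f: "contf f" and g: "contf g" and e: "\<And>x. x \<in> X \<Longrightarrow> f x = g x"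
  have "(\<integral>x. f ((F ^^ i) x) \<partial>\<mu>) = (\<integral>x. g ((F ^^ i) x) \<partial>\<mu>)" for i
    by (intro Bochner_Integration.integral_cong refl) (simp add: e Fn_X)
  then show ?thesis by (intro ext) (simp add: ces_F[OF f] ces_F[OF g])
qed

lemma L_F: "contf h \<Longrightarrow> (\<And>x. x \<in> X \<Longrightarrow> \<bar>h x\<bar> \<le> B) \<Longrightarrow> L (\<lambda>x. h (F x)) = L h"
proof -
  assume h: "contf h" and b: "\<And>x. x \<in> X \<Longrightarrow> \<bar>h x\<bar> \<le> B"
  have hF: "contf (\<lambda>x. h (F x))" by (rule contf_comp[OF h cont_F])
  define a where "a i = (\<integral>x. h ((F ^^ i) x) \<partial>\<mu>)" for i
  have ab: "\<bar>a i\<bar> \<le> B" for i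
    unfolding a_def by (rule abs_int_le[OF probM int_f[OF contf_comp[OF h cont_Fn]]]) (use b Fn_X in auto)
  have d: "ces (\<lambda>x. h (F x)) n - ces h n = (a n - a 0) / real n" for n
  proof -
    have "ces (\<lambda>x. h (F x)) n = (1 / real n) * (\<Sum>i<n. a (Suc i))"
      unfolding ces_F[OF hF] a_def by simp
    moreover have "ces h n = (1 / real n) * (\<Sum>i<n. a i)" unfolding ces_F[OF h] a_def by simp
    ultimately have "ces (\<lambda>x. h (F x)) n - ces h n = (1 / real n) * (\<Sum>i<n. a (Suc i) - a i)"
      by (simp add: sum_subtractf right_diff_distrib)
    then show ?thesis by (simp add: sum_lessThan_telescope)
  qed
  have "(\<lambda>n. ces (\<lambda>x. h (F x)) n - ces h n) \<longlonglongrightarrow> 0"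
  proof (rule Lim_null_comparison[OF _ lim_const_over_n[of "2 * B"]])
    show "\<forall>\<^sub>F n in sequentially. norm (ces (\<lambda>x. h (F x)) n - ces h n) \<le> 2 * B / real n"
    proof (intro always_eventually allI)
      fix n
      have "\<bar>a n - a 0\<bar> \<le> 2 * B" using ab[of n] ab[of 0] by linarith
      then show "norm (ces (\<lambda>x. h (F x)) n - ces h n) \<le> 2 * B / real n"
        unfolding d by (simp add: abs_divide divide_right_mono)
    qed
  qed
  moreover have "(\<lambda>n. ces (\<lambda>x. h (F x)) n - ces h n) \<longlonglongrightarrow> L (\<lambda>x. h (F x)) - L h"
    by (intro tendsto_diff ces_L hF h)
  ultimately show ?thesis using LIMSEQ_unique by fastforce
qed

lemma L_shift: "contf h \<Longrightarrow> L (\<lambda>x. h (shift x)) = L h"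
proof -
  assume h: "contf h"
  have hs: "contf (\<lambda>x. h (shift x))" by (rule contf_comp[OF h cont_shift_by])
  have "(\<integral>x. h (shift ((F ^^ i) x)) \<partial>\<mu>) = (\<integral>x. h ((F ^^ i) x) \<partial>\<mu>)" for i
  proof -
    have "(\<integral>x. h (shift ((F ^^ i) x)) \<partial>\<mu>) = (\<integral>x. h ((F ^^ i) (shift x)) \<partial>\<mu>)"
      by (intro Bochner_Integration.integral_cong refl) (simp add: Fn_shift)
    also have "\<dots> = (\<integral>x. h ((F ^^ i) x) \<partial>\<mu>)"
      by (rule int_shift1[OF contf_comp[OF h cont_Fn]])
    finally show ?thesis .
  qed
  then have "ces (\<lambda>x. h (shift x)) = ces h" by (intro ext) (simp add: ces_F[OF hs] ces_F[OF h])
  then show ?thesis by (simp add: L_def)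
qed

lemma preimage_CO: "continuous_map TX TX T' \<Longrightarrow> S \<in> CO \<Longrightarrow> T' -` S \<inter> X \<in> CO"
proof -
  assume c: "continuous_map TX TX T'" and S: "S \<in> CO"
  have e: "{x \<in> topspace TX. T' x \<in> S} = T' -` S \<inter> X" using X_sub by auto
  have "openin TX {x \<in> topspace TX. T' x \<in> S}" by (rule openin_continuous_map_preimage[OF c CO_open[OF S]])
  moreover have "closedin TX {x \<in> topspace TX. T' x \<in> S}" by (rule closedin_continuous_map_preimage[OF c CO_closed[OF S]])
  ultimately show ?thesis unfolding e CO_def by blast
qed

lemma inv_gen:
  assumes M: "space Mc = X" "sets Mc = borel_sets_on A X" "\<And>S. S \<in> CO \<Longrightarrow> emeasure Mc S = mu0 S"
    and c: "continuous_map TX TX T'"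
    and eqL: "\<And>S. S \<in> CO \<Longrightarrow> L (indicator (T' -` S \<inter> X)) = L (indicator S)"
  shows "invariant_measure Mc T'"
proof -
  have meas: "T' \<in> Mc \<rightarrow>\<^sub>M Mc" by (rule meas_map[OF M(1,2) X_sub c])
  have sMc: "sets Mc = sigma_sets X CO" using M(2) sigma_CO by simp
  have "distr Mc Mc T' = Mc"
  proof (rule measure_eqI_generator_eq[where E=CO and \<Omega>=X and A="\<lambda>_. X"])
    show "Int_stable CO" by (rule Int_stableI) (rule CO_Int)
    show "CO \<subseteq> Pow X" using CO_sub by blast
    fix S assume S: "S \<in> CO"
    have Ss: "S \<in> sets Mc" using S sMc by (auto intro: sigma_sets.Basic)
    have "emeasure (distr Mc Mc T') S = emeasure Mc (T' -` S \<inter> space Mc)"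
      by (rule emeasure_distr[OF meas Ss])
    also have "\<dots> = mu0 (T' -` S \<inter> X)" using M(1,3) preimage_CO[OF c S] by simp
    also have "\<dots> = mu0 S" unfolding mu0_def using eqL[OF S] by simp
    also have "\<dots> = emeasure Mc S" using M(3)[OF S] by simp
    finally show "emeasure (distr Mc Mc T') S = emeasure Mc S" .
  next
    show "sets (distr Mc Mc T') = sigma_sets X CO" using sMc by simp
    show "sets Mc = sigma_sets X CO" by (rule sMc)
    show "range (\<lambda>_. X) \<subseteq> CO" using CO_X by blast
    show "(\<Union>i::nat. X) = X" by simp
    fix i :: nat
    have "emeasure (distr Mc Mc T') X = emeasure Mc (T' -` X \<inter> space Mc)"
      by (rule emeasure_distr[OF meas]) (use sMc CO_X in \<open>auto intro: sigma_sets.Basic\<close>)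
    also have "\<dots> \<le> emeasure Mc X" using M(1) by (intro emeasure_mono) (auto simp: sets.top[of Mc, simplified M(1)])
    also have "\<dots> = mu0 X" using M(3)[OF CO_X] .
    finally show "emeasure (distr Mc Mc T') X \<noteq> \<infinity>" by (auto simp: mu0_def top_unique)
  qed
  then show ?thesis using meas by (simp add: invariant_measure_def)
qed

theorem main:
  "\<exists>\<mu>c. borel_prob_on A X \<mu>c \<and>
     (\<forall>f. continuous_map (subtopology (full_shift_top A) X) euclideanreal f \<longrightarrow>
        (\<lambda>n. (1 / real n) * (\<Sum>i<n. integral\<^sup>L (distr \<mu> \<mu> (F ^^ i)) f))
          \<longlonglongrightarrow> integral\<^sup>L \<mu>c f) \<and>
     invariant_measure \<mu>c F \<and> invariant_measure \<mu>c shift"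
proof -
  obtain Mc where M: "sets Mc = borel_sets_on A X" "space Mc = X" "\<And>S. S \<in> CO \<Longrightarrow> emeasure Mc S = mu0 S"
    using exists_muc by blast
  have "emeasure Mc (space Mc) = 1" using M(2) M(3)[OF CO_X] L_ind_X by (simp add: mu0_def)
  then have P: "prob_space Mc" by (rule prob_spaceI)
  have mL: "measure Mc S = L (indicator S)" if S: "S \<in> CO" for S
    using M(3)[OF S] L_ind_nonneg[OF S] by (simp add: measure_def mu0_def)
  have bp: "borel_prob_on A X Mc" using P M by (simp add: borel_prob_on_def)
  have conv: "(\<lambda>n. (1 / real n) * (\<Sum>i<n. integral\<^sup>L (distr \<mu> \<mu> (F ^^ i)) f)) \<longlonglongrightarrow> integral\<^sup>L Mc f"
    if f: "contf f" for f
  proof -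
    have "ces f \<longlonglongrightarrow> L f" by (rule ces_L[OF f])
    then have "ces f \<longlonglongrightarrow> integral\<^sup>L Mc f" using int_eq[OF P M(2,1) mL f] by simp
    then show ?thesis by (simp add: ces_def[abs_def])
  qed
  have iF: "invariant_measure Mc F"
  proof (rule inv_gen[OF M(2,1,3) cont_F])
    fix S assume S: "S \<in> CO"
    have c1: "contf (indicator (F -` S \<inter> X))" by (rule contf_ind[OF preimage_CO[OF cont_F S]])
    have c2: "contf (\<lambda>x. indicator S (F x) :: real)" by (rule contf_comp[OF contf_ind[OF S] cont_F])
    have "ces (indicator (F -` S \<inter> X)) = ces (\<lambda>x. indicator S (F x))"
      by (rule ces_cong[OF c1 c2]) (simp add: indicator_def)
    then have "L (indicator (F -` S \<inter> X)) = L (\<lambda>x. indicator S (F x))" by (simp add: L_def)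
    also have "\<dots> = L (indicator S)" by (rule L_F[OF contf_ind[OF S], of 1]) (simp add: indicator_def)
    finally show "L (indicator (F -` S \<inter> X)) = L (indicator S)" .
  qed
  have iS: "invariant_measure Mc shift"
  proof (rule inv_gen[OF M(2,1,3) cont_shift_by])
    fix S assume S: "S \<in> CO"
    have c1: "contf (indicator (shift -` S \<inter> X))" by (rule contf_ind[OF preimage_CO[OF cont_shift_by S]])
    have c2: "contf (\<lambda>x. indicator S (shift x) :: real)" by (rule contf_comp[OF contf_ind[OF S] cont_shift_by])
    have "ces (indicator (shift -` S \<inter> X)) = ces (\<lambda>x. indicator S (shift x))"
      by (rule ces_cong[OF c1 c2]) (simp add: indicator_def)
    then have "L (indicator (shift -` S \<inter> X)) = L (\<lambda>x. indicator S (shift x))" by (simp add: L_def)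
    also have "\<dots> = L (indicator S)" by (rule L_shift[OF contf_ind[OF S]])
    finally show "L (indicator (shift -` S \<inter> X)) = L (indicator S)" .
  qed
  show ?thesis using bp conv iF iS by blast
qed

end

theorem mainTheorem5:
  fixes A :: "'a set" and X :: "(int \<Rightarrow> 'a) set"
    and F :: "(int \<Rightarrow> 'a) \<Rightarrow> (int \<Rightarrow> 'a)"
    and \<mu> :: "(int \<Rightarrow> 'a) measure" and k :: int
  assumes "finite A"
    and "subshift A X"
    and "cellular_automaton A X F"
    and "borel_prob_on A X \<mu>"
    and "shift_ergodic \<mu>"
    and "equicontinuous_measure \<mu> X (F \<circ> shift_by (- k))"
  shows "\<exists>\<mu>c. borel_prob_on A X \<mu>c \<and>
     (\<forall>f. continuous_map (subtopology (full_shift_top A) X) euclideanreal f \<longrightarrow>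
        (\<lambda>n. (1 / real n) * (\<Sum>i<n. integral\<^sup>L (distr \<mu> \<mu> (F ^^ i)) f))
          \<longlonglongrightarrow> integral\<^sup>L \<mu>c f) \<and>
     invariant_measure \<mu>c F \<and> invariant_measure \<mu>c shift"
  using ctx.main[OF ctx.intro[OF assms]] .

end
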